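(* Let $W=(\omega_1,\dots,\omega_r)$ be a suitable basis of $A$ at $\{\beta_1,\ldots,\beta_I\}$. (i) Let $e_w\in C[x]$ and $M_w\in C[x]^{r\times r}$ be such that $SW=\frac1{e_w}M_wW$ (with $\gcd$ of $e_w$ and all entries of $M_w$ equal to $1$). Then $e_w$ is shift-free and every root of $e_w$ in $\bar C$ lies in $\{\beta_1,\dots,\beta_I\}$. (ii) Let $f_w\in C[x]$ and $N_w\in C[x]^{r\times r}$ be such that $W=\frac1{f_w}N_wSW$ (with $\gcd$ of $f_w$ and all entries of $N_w$ equal to $1$). Then $f_w$ is shift-free and every root of $f_w$ in $\bar C$ lies in $\{\beta_1,\dots,\beta_I\}$. In particular $M_w$ and $N_w$ are invertible over $C(x)$.
   Context: Let $C$ be a field of characteristic zero and $\bar C$ its algebraic closure; $\sigma(f)(x)=f(x+1)$, $C(x)[S]$ the Ore algebra with $Sf=\sigma(f)S$. Fix $L=\sum_{i=0}^r\ell_iS^i\in C[x][S]$ with $\ell_0\ell_r\ne0$ and $A=C(x)[S]/C(x)[S]L$; for a basis $W$, $SW=(S\omega_1,\dots,S\omega_r)$. For $\alpha\in\bar C$, operators $P=\sum p_iS^i$ act on $b:\alpha+\mathbb Z\to\bar C((q))$ by $(P\cdot b)(z)=\sum p_i(z+q)b(z+i)$; $\operatorname{Sol}_\alpha(L)=\{b:L\cdot b=0\}$; $\operatorname{val}_\alpha(f)=\min_{b\in\operatorname{Sol}_\alpha(L)}(\nu_q((f\cdot b)(\alpha))-\liminf_n\nu_q(b(\alpha-n)))$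 ($\nu_q$ the $q$-adic valuation, $\infty-\infty=\infty$); $f$ is integral at $\alpha$ if $\operatorname{val}_\alpha(f)\ge0$; with $C(x)_\alpha=\{p/q:q(\alpha)\ne0\}$, a local integral basis at $\alpha$ is a basis of the $C(x)_\alpha$-module of integral elements at $\alpha$, and at a set $Z$ if it is one at each point of $Z$. On $\alpha+\mathbb Z$, $\beta<\gamma$ means $\beta-\gamma$ is a negative integer. A polynomial $p$ is shift-free if $\gcd(p,\sigma^i(p))=1$ for all nonzero $i\in\mathbb Z$. Suitable bases: let $\alpha_1+\mathbb Z,\dots,\alpha_I+\mathbb Z$ be the distinct orbits in $\bar C/\mathbb Z$ containing a root of $\ell_0\ell_r$; in orbit $i$ let $\alpha_{i,1}<\dots<\alpha_{i,J_i}$ be the roots of $\ell_0\ell_r$, and choose $\beta_i\in\alpha_i+\mathbb Z$ with $\alpha_{i,J_i}\le\beta_i$, such that whenever $\alpha_{i,J_i}$ and $\alpha_{i',J_{i'}}$ are conjugate over $C$ one has $\beta_i-\alpha_{i,J_i}=\beta_{i'}-\alpha_{i',J_{i'}}$. Let $Z=\bigcup_{i=1}^I\{\gamma\in\alpha_i+\mathbb Z\mid\alpha_{i,1}<\gamma\le\beta_i\}$. A $C(x)$-basis $W$ of $A$ is suitable at $\{\beta_1,\dots,\beta_I\}$ if it is a local integral basis of $A$ at $Z$ and, for every $\alpha\in\bar C\setminus Z$, it generates the same $C(x)_\alpha$-module as $\{1,S,\dots,S^{r-1}\}$. *)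

theory Defs
  imports "HOL-Algebra.Algebraic_Closure_Type"
                    "HOL-Computational_Algebra.Formal_Laurent_Series"
          "HOL-Library.Extended_Real"
begin

(* C = 'a :: field_char_0,  \<bar>C\<bar> = 'a alg_closure (embedding to_ac),
   C(x) = 'a poly fract,  \<bar>C\<bar>((q)) = 'a alg_closure fls (q = fls_X). *)

type_synonym 'a ratf = "'a poly fract"

definition shiftp :: "int \<Rightarrow> 'a::comm_ring_1 poly \<Rightarrow> 'a poly" where
  "shiftp i p = pcompose p [:of_int i, 1:]"

definition sigmaR :: "'a::field_char_0 ratf \<Rightarrow> 'a ratf" where
  "sigmaR c = (SOME v. \<exists>n d. d \<noteq> 0 \<and> c = to_fract n / to_fract d \<and>
                       v = to_fract (shiftp 1 n) / to_fract (shiftp 1 d))"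

abbreviation acp :: "'a::field poly \<Rightarrow> 'a alg_closure poly" where
  "acp p \<equiv> map_poly to_ac p"

text \<open>Evaluation of a rational function c at z + q, as a Laurent series in q.\<close>
definition evalR :: "'a::field_char_0 ratf \<Rightarrow> 'a alg_closure \<Rightarrow> 'a alg_closure fls" where
  "evalR c z = (SOME v. \<exists>n d. d \<noteq> 0 \<and> c = to_fract n / to_fract d \<and> v =
      poly (map_poly fls_const (acp n)) (fls_const z + fls_X)
    / poly (map_poly fls_const (acp d)) (fls_const z + fls_X))"

definition inLoc :: "'a::field_char_0 alg_closure \<Rightarrow> 'a ratf \<Rightarrow> bool" where
  "inLoc \<alpha> c \<longleftrightarrow> (\<exists>p q. poly (acp q) \<alpha> \<noteq> 0 \<and> c = to_fract p / to_fract q)"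

text \<open>Elements of A = C(x)[S]/C(x)[S]L are represented by their coordinate vectors
  w.r.t. 1, S, ..., S^(r-1) (coefficients c i, i < r; zero for i >= r).
  The operator L = sum_{i=0}^r l_i S^i is given by l :: nat => 'a poly and r.\<close>
definition Aelt :: "nat \<Rightarrow> (nat \<Rightarrow> 'a::field_char_0 ratf) \<Rightarrow> bool" where
  "Aelt r c \<longleftrightarrow> (\<forall>i\<ge>r. c i = 0)"

definition lincomb :: "nat \<Rightarrow> (nat \<Rightarrow> 'a::field_char_0 ratf) \<Rightarrow> (nat \<Rightarrow> nat \<Rightarrow> 'a ratf) \<Rightarrow> nat \<Rightarrow> 'a ratf" where
  "lincomb r a W = (\<lambda>i. \<Sum>j<r. a j * W j i)"

definition stdbasis :: "nat \<Rightarrow> nat \<Rightarrow> 'a::field_char_0 ratf" where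
  "stdbasis j = (\<lambda>i. if i = j then 1 else 0)"

text \<open>Left multiplication by S on A: S * sum c_i S^i = sum sigma(c_i) S^(i+1),
  reduced using S^r = - sum_{k<r} (l_k / l_r) S^k modulo C(x)[S]L.\<close>
definition Sop :: "(nat \<Rightarrow> 'a::field_char_0 poly) \<Rightarrow> nat \<Rightarrow> (nat \<Rightarrow> 'a ratf) \<Rightarrow> nat \<Rightarrow> 'a ratf" where
  "Sop l r c = (\<lambda>k. if k < r then
       (if k = 0 then 0 else sigmaR (c (k - 1)))
       - sigmaR (c (r - 1)) * to_fract (l k) / to_fract (l r)
     else 0)"

definition isBasis :: "nat \<Rightarrow> (nat \<Rightarrow> nat \<Rightarrow> 'a::field_char_0 ratf) \<Rightarrow> bool" where
  "isBasis r W \<longleftrightarrow> (\<forall>j<r. Aelt r (W j)) \<and>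
     (\<forall>c. Aelt r c \<longrightarrow> (\<exists>!a. (\<forall>j\<ge>r. a j = 0) \<and> c = lincomb r a W))"

text \<open>Sequences b : alpha + Z -> \<bar>C\<bar>((q)), represented by b n = b(alpha + n).\<close>
definition Sol :: "(nat \<Rightarrow> 'a::field_char_0 poly) \<Rightarrow> nat \<Rightarrow> 'a alg_closure
                   \<Rightarrow> (int \<Rightarrow> 'a alg_closure fls) set" where
  "Sol l r \<alpha> = {b. \<forall>n::int. (\<Sum>i\<le>r. evalR (to_fract (l i)) (\<alpha> + of_int n) * b (n + int i)) = 0}"

text \<open>(f . b)(alpha) for f = sum_{i<r} c_i S^i.\<close>
definition actAt :: "nat \<Rightarrow> (nat \<Rightarrow> 'a::field_char_0 ratf) \<Rightarrow> 'a alg_closure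
                     \<Rightarrow> (int \<Rightarrow> 'a alg_closure fls) \<Rightarrow> 'a alg_closure fls" where
  "actAt r c \<alpha> b = (\<Sum>i<r. evalR (c i) \<alpha> * b (int i))"

definition qval :: "'b::zero fls \<Rightarrow> ereal" where
  "qval x = (if x = 0 then \<infinity> else ereal (of_int (fls_subdegree x)))"

definition valAt :: "(nat \<Rightarrow> 'a::field_char_0 poly) \<Rightarrow> nat \<Rightarrow> 'a alg_closure
                    \<Rightarrow> (nat \<Rightarrow> 'a ratf) \<Rightarrow> ereal" where
  "valAt l r \<alpha> c = (INF b\<in>Sol l r \<alpha>.
      qval (actAt r c \<alpha> b) - Liminf sequentially (\<lambda>n::nat. qval (b (- int n))))"

definition integralAt :: "(nat \<Rightarrow> 'a::field_char_0 poly) \<Rightarrow> nat \<Rightarrow> 'a alg_closure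
                         \<Rightarrow> (nat \<Rightarrow> 'a ratf) \<Rightarrow> bool" where
  "integralAt l r \<alpha> c \<longleftrightarrow> valAt l r \<alpha> c \<ge> 0"

definition spanLoc :: "nat \<Rightarrow> 'a::field_char_0 alg_closure \<Rightarrow> (nat \<Rightarrow> nat \<Rightarrow> 'a ratf)
                      \<Rightarrow> (nat \<Rightarrow> 'a ratf) set" where
  "spanLoc r \<alpha> W = {lincomb r a W | a. \<forall>j<r. inLoc \<alpha> (a j)}"

definition localIntegralBasis :: "(nat \<Rightarrow> 'a::field_char_0 poly) \<Rightarrow> nat \<Rightarrow> 'a alg_closure
                                 \<Rightarrow> (nat \<Rightarrow> nat \<Rightarrow> 'a ratf) \<Rightarrow> bool" where
  "localIntegralBasis l r \<alpha> W \<longleftrightarrow>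
     (\<forall>j<r. Aelt r (W j) \<and> integralAt l r \<alpha> (W j)) \<and>
     (\<forall>a. (\<forall>j<r. inLoc \<alpha> (a j)) \<and> lincomb r a W = (\<lambda>_. 0) \<longrightarrow> (\<forall>j<r. a j = 0)) \<and>
     (\<forall>c. Aelt r c \<and> integralAt l r \<alpha> c \<longrightarrow> c \<in> spanLoc r \<alpha> W)"

definition isRoot :: "(nat \<Rightarrow> 'a::field_char_0 poly) \<Rightarrow> nat \<Rightarrow> 'a alg_closure \<Rightarrow> bool" where
  "isRoot l r \<rho> \<longleftrightarrow> poly (acp (l 0 * l r)) \<rho> = 0"

definition sameOrb :: "'a::field_char_0 alg_closure \<Rightarrow> 'a alg_closure \<Rightarrow> bool" where
  "sameOrb a b \<longleftrightarrow> a - b \<in> \<int>"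

definition leOrb :: "'a::field_char_0 alg_closure \<Rightarrow> 'a alg_closure \<Rightarrow> bool" where
  "leOrb a b \<longleftrightarrow> (\<exists>n::nat. b = a + of_nat n)"

definition ltOrb :: "'a::field_char_0 alg_closure \<Rightarrow> 'a alg_closure \<Rightarrow> bool" where
  "ltOrb a b \<longleftrightarrow> (\<exists>n::nat. n > 0 \<and> b = a + of_nat n)"

definition conjugate :: "'a::field_char_0 alg_closure \<Rightarrow> 'a alg_closure \<Rightarrow> bool" where
  "conjugate a b \<longleftrightarrow> (\<forall>p::'a poly. poly (acp p) a = 0 \<longleftrightarrow> poly (acp p) b = 0)"

definition maxRootOf :: "(nat \<Rightarrow> 'a::field_char_0 poly) \<Rightarrow> nat \<Rightarrow> 'a alg_closure \<Rightarrow> 'a alg_closure \<Rightarrow> bool" where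
  "maxRootOf l r \<rho> \<beta> \<longleftrightarrow> isRoot l r \<rho> \<and> sameOrb \<rho> \<beta> \<and>
     (\<forall>\<sigma>. isRoot l r \<sigma> \<and> sameOrb \<sigma> \<beta> \<longrightarrow> leOrb \<sigma> \<rho>)"

definition admissibleBetas :: "(nat \<Rightarrow> 'a::field_char_0 poly) \<Rightarrow> nat \<Rightarrow> 'a alg_closure set \<Rightarrow> bool" where
  "admissibleBetas l r B \<longleftrightarrow>
     (\<forall>\<rho>. isRoot l r \<rho> \<longrightarrow> (\<exists>!\<beta>. \<beta> \<in> B \<and> sameOrb \<rho> \<beta>)) \<and>
     (\<forall>\<beta>\<in>B. \<exists>\<rho>. isRoot l r \<rho> \<and> sameOrb \<rho> \<beta>) \<and>
     (\<forall>\<beta>\<in>B. \<forall>\<rho>. isRoot l r \<rho> \<and> sameOrb \<rho> \<beta> \<longrightarrow> leOrb \<rho> \<beta>) \<and>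
     (\<forall>\<beta>\<in>B. \<forall>\<beta>'\<in>B. \<forall>\<rho> \<rho>'. maxRootOf l r \<rho> \<beta> \<and> maxRootOf l r \<rho>' \<beta>' \<and> conjugate \<rho> \<rho>'
          \<longrightarrow> \<beta> - \<rho> = \<beta>' - \<rho>')"

definition Zset :: "(nat \<Rightarrow> 'a::field_char_0 poly) \<Rightarrow> nat \<Rightarrow> 'a alg_closure set \<Rightarrow> 'a alg_closure set" where
  "Zset l r B = {\<gamma>. \<exists>\<beta>\<in>B. leOrb \<gamma> \<beta> \<and> (\<exists>\<rho>. isRoot l r \<rho> \<and> ltOrb \<rho> \<gamma>)}"

definition suitable :: "(nat \<Rightarrow> 'a::field_char_0 poly) \<Rightarrow> nat \<Rightarrow> 'a alg_closure set
                       \<Rightarrow> (nat \<Rightarrow> nat \<Rightarrow> 'a ratf) \<Rightarrow> bool" where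
  "suitable l r B W \<longleftrightarrow> isBasis r W \<and>
     (\<forall>\<alpha>\<in>Zset l r B. localIntegralBasis l r \<alpha> W) \<and>
     (\<forall>\<alpha>. \<alpha> \<notin> Zset l r B \<longrightarrow> spanLoc r \<alpha> W = spanLoc r \<alpha> stdbasis)"

definition shiftFree :: "'a::field_char_0 poly \<Rightarrow> bool" where
  "shiftFree p \<longleftrightarrow> (\<forall>i::int. i \<noteq> 0 \<longrightarrow> coprime p (shiftp i p))"

definition gcdOne :: "'a::field_char_0 poly set \<Rightarrow> bool" where
  "gcdOne S \<longleftrightarrow> (\<forall>d. (\<forall>x\<in>S. d dvd x) \<longrightarrow> is_unit d)"

definition invertibleMat :: "nat \<Rightarrow> (nat \<Rightarrow> nat \<Rightarrow> 'a::field_char_0 ratf) \<Rightarrow> bool" where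
  "invertibleMat r P \<longleftrightarrow> (\<exists>Q. (\<forall>i<r. \<forall>k<r. (\<Sum>j<r. P i j * Q j k) = (if i = k then 1 else 0)) \<and>
                              (\<forall>i<r. \<forall>k<r. (\<Sum>j<r. Q i j * P j k) = (if i = k then 1 else 0)))"

end

theory Submission imports Defs begin
unbundle fps_syntax

definition rhom :: "('a::comm_ring_1 \<Rightarrow> 'b::comm_ring_1) \<Rightarrow> bool" where
  "rhom f \<longleftrightarrow> f 0 = 0 \<and> f 1 = 1 \<and> (\<forall>a b. f (a + b) = f a + f b) \<and> (\<forall>a b. f (a * b) = f a * f b)"

lemma rhom_sum: "rhom f \<Longrightarrow> f (sum g A) = (\<Sum>x\<in>A. f (g x))"
  unfolding rhom_def by (induction A rule: infinite_finite_induct) auto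

lemma rhom_map_add: "rhom f \<Longrightarrow> map_poly f (p + q) = map_poly f p + map_poly f q"
  unfolding rhom_def by (intro poly_eqI) (simp add: coeff_map_poly)

lemma rhom_map_mult: "rhom f \<Longrightarrow> map_poly f (p * q) = map_poly f p * map_poly f q"
proof (intro poly_eqI)
  fix n assume h: "rhom f"
  hence "f 0 = 0" "\<And>a b. f (a * b) = f a * f b" unfolding rhom_def by auto
  thus "coeff (map_poly f (p * q)) n = coeff (map_poly f p * map_poly f q) n"
    by (simp add: coeff_map_poly coeff_mult rhom_sum[OF h])
qed

lemma rhom_map_one: "rhom f \<Longrightarrow> map_poly f 1 = 1"
  unfolding rhom_def by simp

lemma rhom_map_const: "rhom f \<Longrightarrow> map_poly f [:c:] = [:f c:]"
  unfolding rhom_def by (simp add: map_poly_pCons)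

lemma rhom_minus: "rhom f \<Longrightarrow> f (- a) = - f a"
proof -
  assume h: "rhom f"
  have "f (- a) + f a = 0" using h unfolding rhom_def by (metis add.left_inverse)
  thus ?thesis by (simp add: eq_neg_iff_add_eq_0)
qed

lemma rhom_map_minus: "rhom f \<Longrightarrow> map_poly f (- p) = - map_poly f p"
  using rhom_minus[of f] unfolding rhom_def by (intro poly_eqI) (simp add: coeff_map_poly)

lemma rhom_map_pcompose: "rhom f \<Longrightarrow> map_poly f (pcompose p q) = pcompose (map_poly f p) (map_poly f q)"
proof (induction p)
  case 0 then show ?case by simp
next
  case (pCons a p)
  have f0: "f 0 = 0" using pCons.prems unfolding rhom_def by simp
  show ?case using pCons
    by (simp add: pcompose_pCons rhom_map_add rhom_map_mult rhom_map_const map_poly_pCons[of f, OF f0])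
qed

lemma rhom_to_ac: "rhom (to_ac :: 'a::field \<Rightarrow> 'a alg_closure)"
  unfolding rhom_def by simp

lemma rhom_fls_const: "rhom (fls_const :: 'a::comm_ring_1 \<Rightarrow> 'a fls)"
  unfolding rhom_def by (simp add: fls_plus_const)

definition Fv :: "'b::field poly \<Rightarrow> 'b \<Rightarrow> 'b fls" where
  "Fv P z = poly (map_poly fls_const P) (fls_const z + fls_X)"

lemma Fv_add: "Fv (P + Q) z = Fv P z + Fv Q z"
  unfolding Fv_def by (simp add: rhom_map_add[OF rhom_fls_const])
lemma Fv_mult: "Fv (P * Q) z = Fv P z * Fv Q z"
  unfolding Fv_def by (simp add: rhom_map_mult[OF rhom_fls_const])
lemma Fv_minus: "Fv (- P) z = - Fv P z"
  unfolding Fv_def by (simp add: rhom_map_minus[OF rhom_fls_const])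
lemma Fv_diff: "Fv (P - Q) z = Fv P z - Fv Q z"
  using Fv_add[of P "-Q" z] Fv_minus[of Q z] by simp
lemma Fv_1: "Fv 1 z = 1"
  unfolding Fv_def by simp
lemma Fv_0: "Fv 0 z = 0"
  unfolding Fv_def by simp
lemma Fv_const: "Fv [:c:] z = fls_const c"
  unfolding Fv_def by (simp add: rhom_map_const[OF rhom_fls_const])
lemma Fv_power: "Fv (P ^ n) z = Fv P z ^ n"
  by (induction n) (simp_all add: Fv_1 Fv_mult)
lemma Fv_lin: "Fv [:-z, 1:] z = fls_X"
  unfolding Fv_def by (simp add: map_poly_pCons fls_plus_const[symmetric])

lemma Fv_coeffs: "(\<forall>k<0. Fv g z $$ k = 0) \<and> Fv g z $$ 0 = poly g z"
proof (induction g)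
  case 0 then show ?case by (simp add: Fv_def)
next
  case (pCons a p)
  have e: "Fv (pCons a p) z = fls_const a + (fls_const z + fls_X) * Fv p z"
    unfolding Fv_def by (simp add: map_poly_pCons)
  have x: "(fls_X * Fv p z) $$ k = Fv p z $$ (k - 1)" for k
    by (simp add: fls_X_times_conv_shift)
  show ?case using pCons.IH unfolding e by (simp add: distrib_right x)
qed

lemma Fv_nonzero_subdeg:
  assumes "P \<noteq> 0"
  shows "Fv P z \<noteq> 0 \<and> fls_subdegree (Fv P z) = int (order z P)"
proof -
  obtain g where g: "P = [:-z,1:] ^ order z P * g" "\<not> [:-z,1:] dvd g"
    using order_decomp[OF assms] by blast
  have gz: "poly g z \<noteq> 0" using g(2) by (simp add: poly_eq_0_iff_dvd)
  have c: "\<forall>k<0. Fv g z $$ k = 0" "Fv g z $$ 0 = poly g z" using Fv_coeffs by auto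
  have gn: "Fv g z \<noteq> 0" using c gz by auto
  have gs: "fls_subdegree (Fv g z) = 0" using c gz by (intro fls_subdegree_eqI) auto
  have "Fv P z = fls_X ^ order z P * Fv g z"
    by (subst g(1)) (simp add: Fv_mult Fv_power Fv_lin)
  thus ?thesis using gn gs by (simp add: fls_subdegree_mult_fls_X_power)
qed

lemma acp_add: "acp (p + q) = acp p + acp q" by (rule rhom_map_add[OF rhom_to_ac])
lemma acp_mult: "acp (p * q) = acp p * acp q" by (rule rhom_map_mult[OF rhom_to_ac])
lemma acp_minus: "acp (- p) = - acp p" by (rule rhom_map_minus[OF rhom_to_ac])
lemma acp_1: "acp 1 = 1" by simp
lemma acp_eq_0: "acp p = 0 \<longleftrightarrow> p = 0"
  by (simp add: map_poly_eq_0_iff)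
lemma acp_shiftp: "acp (shiftp k p) = pcompose (acp p) [:of_int k, 1:]"
  unfolding shiftp_def by (simp add: rhom_map_pcompose[OF rhom_to_ac] map_poly_pCons)

lemma Fv_pcompose_lin: fixes P :: "'b::field poly" shows "Fv (pcompose P [:c, 1:]) z = Fv P (z + c)"
proof -
  have "map_poly fls_const (pcompose P [:c, 1:]) = pcompose (map_poly fls_const P) [:fls_const c, 1:]"
    by (simp add: rhom_map_pcompose[OF rhom_fls_const] map_poly_pCons)
  show ?thesis
  proof -
    have "poly [:fls_const c, 1:] (fls_const z + fls_X) = fls_const (z + c) + (fls_X :: 'b fls)"
      by (simp add: fls_plus_const[symmetric] algebra_simps)
    thus ?thesis unfolding Fv_def using \<open>map_poly fls_const (pcompose P [:c, 1:]) = _\<close>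
      by (simp only: poly_pcompose)
  qed
qed

lemma Fv_shiftp: "Fv (acp (shiftp k p)) z = Fv (acp p) (z + of_int k)"
  by (simp add: acp_shiftp Fv_pcompose_lin)

lemma poly_acp_shiftp: "poly (acp (shiftp k p)) z = poly (acp p) (z + of_int k)"
  by (simp add: acp_shiftp poly_pcompose add.commute)

lemma shiftp_add: "shiftp k (p + q) = shiftp k p + shiftp k q"
  unfolding shiftp_def by (simp add: pcompose_add)
lemma shiftp_mult: "shiftp k (p * q) = shiftp k p * shiftp k q"
  unfolding shiftp_def by (simp add: pcompose_mult)
lemma shiftp_minus: "shiftp k (- p) = - shiftp k p"
  unfolding shiftp_def by (simp add: pcompose_uminus)
lemma shiftp_1: "shiftp k 1 = 1"
  unfolding shiftp_def by (simp add: pcompose_1)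
lemma shiftp_0: "shiftp k 0 = 0"
  unfolding shiftp_def by simp
lemma shiftp_eq_0: "shiftp k (p::'a::field poly) = 0 \<longleftrightarrow> p = 0"
  unfolding shiftp_def by (simp add: pcompose_eq_0_iff)
lemma shiftp_shiftp: "shiftp k (shiftp j p) = shiftp (j + k) p"
  unfolding shiftp_def by (simp add: pcompose_assoc[symmetric] pcompose_pCons add.commute)
lemma shiftp_zero_idx: "shiftp 0 p = p"
  unfolding shiftp_def by simp

lemma frac_rep: "\<exists>n d. d \<noteq> 0 \<and> (c::'a::field poly fract) = to_fract n / to_fract d"
  by (rule Fract_cases[of c]) (auto simp: Fract_conv_to_fract)

lemma frac_eq_iff:
  assumes "d \<noteq> 0" "d' \<noteq> 0"
  shows "(to_fract n / to_fract d :: 'a::field poly fract) = to_fract n' / to_fract d' \<longleftrightarrow> n * d' = n' * d"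
proof -
  have "to_fract d \<noteq> (0::'a poly fract)" "to_fract d' \<noteq> (0::'a poly fract)" using assms by auto
  hence "(to_fract n / to_fract d :: 'a poly fract) = to_fract n' / to_fract d' \<longleftrightarrow>
     to_fract n * to_fract d' = (to_fract n' * to_fract d :: 'a poly fract)"
    by (simp add: frac_eq_eq)
  also have "\<dots> \<longleftrightarrow> n * d' = n' * d" by (simp only: to_fract_mult[symmetric] to_fract_eq_iff)
  finally show ?thesis .
qed

lemma Fv_acp_nz: "d \<noteq> 0 \<Longrightarrow> Fv (acp d) z \<noteq> 0"
  using Fv_nonzero_subdeg[of "acp d" z] by (simp add: acp_eq_0)

lemma evalR_eq:
  assumes "d \<noteq> 0"
  shows "evalR (to_fract n / to_fract d) z = Fv (acp n) z / Fv (acp d) z"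
proof -
  let ?P = "\<lambda>v. \<exists>n' d'. d' \<noteq> 0 \<and> (to_fract n / to_fract d :: 'a poly fract) = to_fract n' / to_fract d' \<and>
      v = Fv (acp n') z / Fv (acp d') z"
  have ex: "?P (Fv (acp n) z / Fv (acp d) z)" using assms by blast
  have "?P v \<Longrightarrow> v = Fv (acp n) z / Fv (acp d) z" for v
  proof -
    assume "?P v"
    then obtain n' d' where h: "d' \<noteq> 0" "(to_fract n / to_fract d :: 'a poly fract) = to_fract n' / to_fract d'"
      "v = Fv (acp n') z / Fv (acp d') z" by blast
    have e: "n * d' = n' * d" using h(2) frac_eq_iff[OF assms h(1)] by simp
    have "Fv (acp n) z * Fv (acp d') z = Fv (acp n') z * Fv (acp d) z"
      using e by (metis Fv_mult acp_mult)
    thus ?thesis using h(3) Fv_acp_nz[OF assms] Fv_acp_nz[OF h(1)] by (simp add: frac_eq_eq)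
  qed
  moreover have "evalR (to_fract n / to_fract d) z = (SOME v. ?P v)"
    unfolding evalR_def Fv_def by simp
  ultimately show ?thesis using someI[of ?P, OF ex] by simp
qed

lemma evalR_to_fract: "evalR (to_fract p) z = Fv (acp p) z"
  using evalR_eq[of 1 p z] by (simp add: Fv_1)

lemma evalR_add: "evalR (a + b) z = evalR a z + evalR b z"
proof -
  obtain n1 d1 where 1: "d1 \<noteq> 0" "a = to_fract n1 / to_fract d1" using frac_rep by blast
  obtain n2 d2 where 2: "d2 \<noteq> 0" "b = to_fract n2 / to_fract d2" using frac_rep by blast
  have s: "a + b = to_fract (n1 * d2 + n2 * d1) / to_fract (d1 * d2)"
    using 1 2 by (simp add: to_fract_mult field_simps)
  have "evalR (a + b) z = Fv (acp (n1 * d2 + n2 * d1)) z / Fv (acp (d1 * d2)) z"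
    unfolding s by (rule evalR_eq) (simp add: 1 2)
  also have "\<dots> = Fv (acp n1) z / Fv (acp d1) z + Fv (acp n2) z / Fv (acp d2) z"
    using Fv_acp_nz[OF 1(1), of z] Fv_acp_nz[OF 2(1), of z]
    by (simp add: acp_add acp_mult Fv_add Fv_mult field_simps)
  also have "\<dots> = evalR a z + evalR b z" using 1 2 by (simp add: evalR_eq)
  finally show ?thesis .
qed

lemma evalR_mult: "evalR (a * b) z = evalR a z * evalR b z"
proof -
  obtain n1 d1 where 1: "d1 \<noteq> 0" "a = to_fract n1 / to_fract d1" using frac_rep by blast
  obtain n2 d2 where 2: "d2 \<noteq> 0" "b = to_fract n2 / to_fract d2" using frac_rep by blast
  have s: "a * b = to_fract (n1 * n2) / to_fract (d1 * d2)"
    using 1 2 by (simp add: to_fract_mult field_simps)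
  have "evalR (a * b) z = Fv (acp (n1 * n2)) z / Fv (acp (d1 * d2)) z"
    unfolding s by (rule evalR_eq) (simp add: 1 2)
  also have "\<dots> = Fv (acp n1) z / Fv (acp d1) z * (Fv (acp n2) z / Fv (acp d2) z)"
    by (simp add: acp_mult Fv_mult)
  also have "\<dots> = evalR a z * evalR b z" using 1 2 by (simp add: evalR_eq)
  finally show ?thesis .
qed

lemma evalR_minus: "evalR (- a) z = - evalR a z"
proof -
  obtain n1 d1 where 1: "d1 \<noteq> 0" "a = to_fract n1 / to_fract d1" using frac_rep by blast
  have s: "- a = to_fract (- n1) / to_fract d1" using 1 by simp
  have "evalR (- a) z = Fv (acp (- n1)) z / Fv (acp d1) z"
    unfolding s by (rule evalR_eq) (simp add: 1)
  also have "\<dots> = - evalR a z" using 1 by (simp add: evalR_eq acp_minus Fv_minus)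
  finally show ?thesis .
qed

lemma evalR_diff: "evalR (a - b) z = evalR a z - evalR b z"
  using evalR_add[of a "-b" z] evalR_minus[of b z] by simp

lemma evalR_0: "evalR 0 z = 0"
  using evalR_to_fract[of 0 z] by (simp add: Fv_0)

lemma evalR_1: "evalR 1 z = 1"
  using evalR_to_fract[of 1 z] by (simp add: Fv_1)

lemma evalR_nz: "a \<noteq> 0 \<Longrightarrow> evalR a z \<noteq> 0"
proof -
  assume a: "a \<noteq> 0"
  obtain n1 d1 where 1: "d1 \<noteq> 0" "a = to_fract n1 / to_fract d1" using frac_rep by blast
  have "n1 \<noteq> 0" using 1 a by auto
  thus ?thesis using 1 Fv_acp_nz[of n1 z] Fv_acp_nz[OF 1(1), of z] by (simp add: evalR_eq)
qed

lemma evalR_divide: "evalR (a / b) z = evalR a z / evalR b z"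
proof (cases "b = 0")
  case True then show ?thesis by (simp add: evalR_0)
next
  case False
  have "evalR (a / b) z * evalR b z = evalR a z"
    using False by (simp add: evalR_mult[symmetric])
  thus ?thesis using evalR_nz[OF False] by (simp add: field_simps)
qed

lemma evalR_sum: "evalR (sum f A) z = (\<Sum>x\<in>A. evalR (f x) z)"
  by (induction A rule: infinite_finite_induct) (simp_all add: evalR_0 evalR_add)

section \<open>Shifts of rational functions\<close>

definition shR :: "int \<Rightarrow> 'a::field_char_0 poly fract \<Rightarrow> 'a poly fract" where
  "shR k c = (SOME v. \<exists>n d. d \<noteq> 0 \<and> c = to_fract n / to_fract d \<and>
                       v = to_fract (shiftp k n) / to_fract (shiftp k d))"

lemma shR_eq:
  assumes "d \<noteq> 0"
  shows "shR k (to_fract n / to_fract d) = to_fract (shiftp k n) / to_fract (shiftp k d)"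
proof -
  let ?P = "\<lambda>v. \<exists>n' d'. d' \<noteq> 0 \<and> (to_fract n / to_fract d :: 'a poly fract) = to_fract n' / to_fract d' \<and>
      v = to_fract (shiftp k n') / to_fract (shiftp k d')"
  have ex: "?P (to_fract (shiftp k n) / to_fract (shiftp k d))" using assms by blast
  have "?P v \<Longrightarrow> v = to_fract (shiftp k n) / to_fract (shiftp k d)" for v
  proof -
    assume "?P v"
    then obtain n' d' where h: "d' \<noteq> 0" "(to_fract n / to_fract d :: 'a poly fract) = to_fract n' / to_fract d'"
      "v = to_fract (shiftp k n') / to_fract (shiftp k d')" by blast
    have e: "n * d' = n' * d" using h(2) frac_eq_iff[OF assms h(1)] by simp
    hence "shiftp k n * shiftp k d' = shiftp k n' * shiftp k d" by (metis shiftp_mult)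
    thus ?thesis using h(3) frac_eq_iff[of "shiftp k d'" "shiftp k d"] assms h(1)
      by (simp add: shiftp_eq_0)
  qed
  thus ?thesis unfolding shR_def using someI[of ?P, OF ex] by blast
qed

lemma sigmaR_shR: "sigmaR c = shR 1 c"
proof -
  obtain n d where nd: "d \<noteq> 0" "c = to_fract n / to_fract d" using frac_rep by blast
  let ?P = "\<lambda>v. \<exists>n' d'. d' \<noteq> 0 \<and> c = to_fract n' / to_fract d' \<and> v = to_fract (shiftp 1 n') / to_fract (shiftp 1 d')"
  have ex: "?P (shR 1 c)" using nd shR_eq[OF nd(1), of 1 n] by blast
  have "?P v \<Longrightarrow> v = shR 1 c" for v
    using shR_eq by (metis)
  thus ?thesis unfolding sigmaR_def using someI[of ?P, OF ex] by blast
qed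

lemma shR_to_fract: "shR k (to_fract p) = to_fract (shiftp k p)"
  using shR_eq[of 1 k p] by (simp add: shiftp_1)

lemma shR_add: "shR k (a + b) = shR k a + shR k b"
proof -
  obtain n1 d1 where 1: "d1 \<noteq> 0" "a = to_fract n1 / to_fract d1" using frac_rep by blast
  obtain n2 d2 where 2: "d2 \<noteq> 0" "b = to_fract n2 / to_fract d2" using frac_rep by blast
  have s: "a + b = to_fract (n1 * d2 + n2 * d1) / to_fract (d1 * d2)"
    using 1 2 by (simp add: to_fract_mult field_simps)
  have "shR k (a + b) = to_fract (shiftp k (n1 * d2 + n2 * d1)) / to_fract (shiftp k (d1 * d2))"
    unfolding s by (rule shR_eq) (simp add: 1 2)
  also have "\<dots> = to_fract (shiftp k n1) / to_fract (shiftp k d1) + to_fract (shiftp k n2) / to_fract (shiftp k d2)"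
    using 1 2 by (simp add: shiftp_add shiftp_mult shiftp_eq_0 to_fract_mult field_simps)
  also have "\<dots> = shR k a + shR k b" using 1 2 by (simp add: shR_eq)
  finally show ?thesis .
qed

lemma shR_mult: "shR k (a * b) = shR k a * shR k b"
proof -
  obtain n1 d1 where 1: "d1 \<noteq> 0" "a = to_fract n1 / to_fract d1" using frac_rep by blast
  obtain n2 d2 where 2: "d2 \<noteq> 0" "b = to_fract n2 / to_fract d2" using frac_rep by blast
  have s: "a * b = to_fract (n1 * n2) / to_fract (d1 * d2)"
    using 1 2 by (simp add: to_fract_mult field_simps)
  have "shR k (a * b) = to_fract (shiftp k (n1 * n2)) / to_fract (shiftp k (d1 * d2))"
    unfolding s by (rule shR_eq) (simp add: 1 2)
  also have "\<dots> = to_fract (shiftp k n1) / to_fract (shiftp k d1) * (to_fract (shiftp k n2) / to_fract (shiftp k d2))"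
    by (simp add: shiftp_mult to_fract_mult)
  also have "\<dots> = shR k a * shR k b" using 1 2 by (simp add: shR_eq)
  finally show ?thesis .
qed

lemma shR_minus: "shR k (- a) = - shR k a"
proof -
  obtain n1 d1 where 1: "d1 \<noteq> 0" "a = to_fract n1 / to_fract d1" using frac_rep by blast
  have s: "- a = to_fract (- n1) / to_fract d1" using 1 by simp
  have "shR k (- a) = to_fract (shiftp k (- n1)) / to_fract (shiftp k d1)"
    unfolding s by (rule shR_eq) (simp add: 1)
  also have "\<dots> = - shR k a" using 1 by (simp add: shR_eq shiftp_minus)
  finally show ?thesis .
qed

lemma shR_diff: "shR k (a - b) = shR k a - shR k b"
  using shR_add[of k a "-b"] shR_minus[of k b] by simp

lemma shR_0: "shR k 0 = 0"
  using shR_to_fract[of k 0] by (simp add: shiftp_0)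

lemma shR_1: "shR k 1 = 1"
  using shR_to_fract[of k 1] by (simp add: shiftp_1)

lemma shR_shR: "shR k (shR j c) = shR (j + k) c"
proof -
  obtain n1 d1 where 1: "d1 \<noteq> 0" "c = to_fract n1 / to_fract d1" using frac_rep by blast
  have "shR k (shR j c) = shR k (to_fract (shiftp j n1) / to_fract (shiftp j d1))"
    using 1 by (simp add: shR_eq)
  also have "\<dots> = to_fract (shiftp k (shiftp j n1)) / to_fract (shiftp k (shiftp j d1))"
    by (rule shR_eq) (simp add: 1 shiftp_eq_0)
  also have "\<dots> = shR (j + k) c" using 1 by (simp add: shR_eq shiftp_shiftp)
  finally show ?thesis .
qed

lemma shR_zero_idx: "shR 0 c = c"
proof -
  obtain n1 d1 where 1: "d1 \<noteq> 0" "c = to_fract n1 / to_fract d1" using frac_rep by blast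
  thus ?thesis by (simp add: shR_eq shiftp_zero_idx)
qed

lemma shR_inj: "shR k a = shR k b \<Longrightarrow> a = b"
  by (metis shR_shR shR_zero_idx add.right_inverse)

lemma shR_divide: "shR k (a / b) = shR k a / shR k b"
proof (cases "b = 0")
  case True then show ?thesis by (simp add: shR_0)
next
  case False
  have "shR k b \<noteq> 0" using False shR_inj[of k b 0] by (auto simp: shR_0)
  moreover have "shR k (a / b) * shR k b = shR k a"
    using False by (simp add: shR_mult[symmetric])
  ultimately show ?thesis by (simp add: field_simps)
qed

lemma shR_sum: "shR k (sum f A) = (\<Sum>x\<in>A. shR k (f x))"
  by (induction A rule: infinite_finite_induct) (simp_all add: shR_0 shR_add)

lemma evalR_shR: "evalR (shR k c) z = evalR c (z + of_int k)"
proof -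
  obtain n1 d1 where 1: "d1 \<noteq> 0" "c = to_fract n1 / to_fract d1" using frac_rep by blast
  have "evalR (shR k c) z = evalR (to_fract (shiftp k n1) / to_fract (shiftp k d1)) z"
    using 1 by (simp add: shR_eq)
  also have "\<dots> = Fv (acp (shiftp k n1)) z / Fv (acp (shiftp k d1)) z"
    by (rule evalR_eq) (simp add: 1 shiftp_eq_0)
  also have "\<dots> = evalR c (z + of_int k)" using 1 by (simp add: evalR_eq Fv_shiftp)
  finally show ?thesis .
qed

lemma inLoc_to_fract: "inLoc z (to_fract p)"
  unfolding inLoc_def by (rule exI[of _ p], rule exI[of _ 1]) simp

lemma inLoc_0: "inLoc z 0" using inLoc_to_fract[of z 0] by simp
lemma inLoc_1: "inLoc z 1" using inLoc_to_fract[of z 1] by simp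

lemma inLoc_add: "inLoc z a \<Longrightarrow> inLoc z b \<Longrightarrow> inLoc z (a + b)"
proof -
  assume "inLoc z a" "inLoc z b"
  then obtain p1 q1 p2 q2 where h: "poly (acp q1) z \<noteq> 0" "a = to_fract p1 / to_fract q1"
     "poly (acp q2) z \<noteq> 0" "b = to_fract p2 / to_fract q2" unfolding inLoc_def by blast
  have "q1 \<noteq> 0" "q2 \<noteq> 0" using h by auto
  hence "a + b = to_fract (p1 * q2 + p2 * q1) / to_fract (q1 * q2)" using h by (simp add: to_fract_mult field_simps)
  moreover have "poly (acp (q1 * q2)) z \<noteq> 0" using h by (simp add: acp_mult)
  ultimately show ?thesis unfolding inLoc_def by blast
qed

lemma inLoc_mult: "inLoc z a \<Longrightarrow> inLoc z b \<Longrightarrow> inLoc z (a * b)"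
proof -
  assume "inLoc z a" "inLoc z b"
  then obtain p1 q1 p2 q2 where h: "poly (acp q1) z \<noteq> 0" "a = to_fract p1 / to_fract q1"
     "poly (acp q2) z \<noteq> 0" "b = to_fract p2 / to_fract q2" unfolding inLoc_def by blast
  have "q1 \<noteq> 0" "q2 \<noteq> 0" using h by auto
  hence "a * b = to_fract (p1 * p2) / to_fract (q1 * q2)" using h by (simp add: to_fract_mult field_simps)
  moreover have "poly (acp (q1 * q2)) z \<noteq> 0" using h by (simp add: acp_mult)
  ultimately show ?thesis unfolding inLoc_def by blast
qed

lemma inLoc_minus: "inLoc z a \<Longrightarrow> inLoc z (- a)"
proof -
  assume "inLoc z a"
  then obtain p1 q1 where h: "poly (acp q1) z \<noteq> 0" "a = to_fract p1 / to_fract q1"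
    unfolding inLoc_def by blast
  hence "- a = to_fract (- p1) / to_fract q1" by simp
  thus ?thesis using h unfolding inLoc_def by blast
qed

lemma inLoc_diff: "inLoc z a \<Longrightarrow> inLoc z b \<Longrightarrow> inLoc z (a - b)"
  using inLoc_add[of z a "-b"] inLoc_minus[of z b] by simp

lemma inLoc_sum: "(\<And>x. x \<in> A \<Longrightarrow> inLoc z (f x)) \<Longrightarrow> inLoc z (sum f A)"
  by (induction A rule: infinite_finite_induct) (simp_all add: inLoc_0 inLoc_add)

lemma inLoc_div: "inLoc z a \<Longrightarrow> poly (acp p) z \<noteq> 0 \<Longrightarrow> inLoc z (a / to_fract p)"
proof -
  assume "inLoc z a" and pz: "poly (acp p) z \<noteq> 0"
  then obtain p1 q1 where h: "poly (acp q1) z \<noteq> 0" "a = to_fract p1 / to_fract q1"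
    unfolding inLoc_def by blast
  have "q1 \<noteq> 0" "p \<noteq> 0" using h pz by auto
  hence "a / to_fract p = to_fract p1 / to_fract (q1 * p)" using h by (simp add: to_fract_mult field_simps)
  moreover have "poly (acp (q1 * p)) z \<noteq> 0" using h pz by (simp add: acp_mult)
  ultimately show ?thesis unfolding inLoc_def by blast
qed

lemma inLoc_shR: "inLoc (z + of_int k) c \<Longrightarrow> inLoc z (shR k c)"
proof -
  assume "inLoc (z + of_int k) c"
  then obtain p1 q1 where h: "poly (acp q1) (z + of_int k) \<noteq> 0" "c = to_fract p1 / to_fract q1"
    unfolding inLoc_def by blast
  have "q1 \<noteq> 0" using h by auto
  hence "shR k c = to_fract (shiftp k p1) / to_fract (shiftp k q1)" using h by (simp add: shR_eq)
  moreover have "poly (acp (shiftp k q1)) z \<noteq> 0" using h by (simp add: poly_acp_shiftp)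
  ultimately show ?thesis unfolding inLoc_def by blast
qed

section \<open>Valuations\<close>

lemma qval_mult: "qval (x * y :: 'b::field fls) = qval x + qval y"
  unfolding qval_def by auto

lemma qval_minus: "qval (- x :: 'b::field fls) = qval x"
  unfolding qval_def by auto

lemma qval_divide: "y \<noteq> 0 \<Longrightarrow> qval (x / y :: 'b::field fls) = qval x - qval y"
  unfolding qval_def by (auto simp: fls_divide_subdegree)

lemma qval_add: "min (qval x) (qval y) \<le> qval (x + y :: 'b::field fls)"
proof (cases "x = 0 \<or> y = 0 \<or> x + y = 0")
  case True then show ?thesis unfolding qval_def by auto
next
  case False
  have "min (fls_subdegree x) (fls_subdegree y) \<le> fls_subdegree (x + y)"
    using fls_plus_subdegree[of x y] False by auto
  then show ?thesis unfolding qval_def using False by (auto simp: min_def split: if_splits)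
qed

lemma qval_sum: "(\<And>i. i \<in> A \<Longrightarrow> m \<le> qval (f i)) \<Longrightarrow> m \<le> qval (sum f A :: 'b::field fls)"
proof (induction A rule: infinite_finite_induct)
  case (infinite A) then show ?case by (simp add: qval_def)
next
  case empty then show ?case by (simp add: qval_def)
next
  case (insert x F)
  have "min (qval (f x)) (qval (sum f F)) \<le> qval (f x + sum f F)" by (rule qval_add)
  moreover have "m \<le> min (qval (f x)) (qval (sum f F))" using insert by auto
  ultimately show ?case using insert by (metis order_trans sum.insert)
qed

lemma qval_Fv: "qval (Fv P z) = (if P = 0 then \<infinity> else ereal (of_nat (order z P)))"
  using Fv_nonzero_subdeg[of P z] unfolding qval_def by (auto simp: Fv_def)

lemma qval_Fv_ge0: "0 \<le> qval (Fv P z)"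
  by (simp add: qval_Fv)

lemma qval_Fv_0: "poly P z \<noteq> 0 \<Longrightarrow> qval (Fv P z) = 0"
  using order_0I[of P z] by (auto simp: qval_Fv zero_ereal_def)

lemma qval_Fv_pos: "P \<noteq> 0 \<Longrightarrow> poly P z = 0 \<Longrightarrow> 0 < qval (Fv P z)"
  using order_root[of P z] by (auto simp: qval_Fv zero_ereal_def)

lemma inLoc_qval: "inLoc z c \<Longrightarrow> 0 \<le> qval (evalR c z)"
proof -
  assume "inLoc z c"
  then obtain p1 q1 where h: "poly (acp q1) z \<noteq> 0" "c = to_fract p1 / to_fract q1"
    unfolding inLoc_def by blast
  have q: "q1 \<noteq> 0" using h by auto
  have "qval (evalR c z) = qval (Fv (acp p1) z) - qval (Fv (acp q1) z)"
    using h(2) q by (simp add: evalR_eq qval_divide Fv_acp_nz)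
  also have "\<dots> = qval (Fv (acp p1) z)" using qval_Fv_0[OF h(1)] by simp
  finally show ?thesis using qval_Fv_ge0 by simp
qed

lemma minpoly_exists:
  assumes "p \<noteq> 0" "poly (acp p) z = 0"
  obtains m where "m \<noteq> 0" "poly (acp m) z = 0" "degree m > 0"
    "\<And>q. poly (acp q) z = 0 \<Longrightarrow> m dvd q"
proof -
  define P where "P = (\<lambda>k. \<exists>m::'a poly. m \<noteq> 0 \<and> poly (acp m) z = 0 \<and> degree m = k)"
  have "P (degree p)" using assms unfolding P_def by blast
  hence "P (LEAST k. P k)" by (rule LeastI)
  then obtain m where m: "m \<noteq> 0" "poly (acp m) z = 0" "degree m = (LEAST k. P k)"
    unfolding P_def by blast
  have mind: "\<And>q. q \<noteq> 0 \<Longrightarrow> poly (acp q) z = 0 \<Longrightarrow> degree m \<le> degree q"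
    unfolding m(3) by (rule Least_le) (auto simp: P_def)
  have dvd: "m dvd q" if "poly (acp q) z = 0" for q
  proof (rule ccontr)
    assume nd: "\<not> m dvd q"
    have "q mod m \<noteq> 0" using nd by (simp add: mod_eq_0_iff_dvd)
    moreover have "poly (acp (q mod m)) z = 0"
    proof -
      have "q = m * (q div m) + q mod m" by simp
      hence "poly (acp q) z = poly (acp m) z * poly (acp (q div m)) z + poly (acp (q mod m)) z"
        by (metis acp_add acp_mult poly_add poly_mult)
      thus ?thesis using that m(2) by simp
    qed
    ultimately have "degree m \<le> degree (q mod m)" using mind by blast
    moreover have "degree (q mod m) < degree m" using degree_mod_less'[OF m(1) \<open>q mod m \<noteq> 0\<close>] .
    ultimately show False by simp
  qed
  have "degree m > 0"
  proof (rule ccontr)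
    assume "\<not> degree m > 0"
    then obtain c where "m = [:c:]" by (metis degree_eq_zeroE neq0_conv)
    thus False using m(1,2) by (auto simp: map_poly_pCons)
  qed
  thus ?thesis using that m dvd by blast
qed

lemma not_inLoc_qval:
  assumes "\<not> inLoc z c"
  shows "qval (evalR c z) < 0"
proof -
  define P where "P = (\<lambda>k. \<exists>n d. d \<noteq> 0 \<and> c = to_fract n / to_fract d \<and> degree d = k)"
  obtain n0 d0 where "d0 \<noteq> 0" "c = to_fract n0 / to_fract d0" using frac_rep by blast
  hence "P (degree d0)" unfolding P_def by blast
  hence "P (LEAST k. P k)" by (rule LeastI)
  then obtain n d where nd: "d \<noteq> 0" "c = to_fract n / to_fract d" "degree d = (LEAST k. P k)"
    unfolding P_def by blast
  have mind: "\<And>n' d'. d' \<noteq> 0 \<Longrightarrow> c = to_fract n' / to_fract d' \<Longrightarrow> degree d \<le> degree d'"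
    unfolding nd(3) by (rule Least_le) (auto simp: P_def)
  have dz: "poly (acp d) z = 0" using assms nd unfolding inLoc_def by blast
  have nz: "poly (acp n) z \<noteq> 0"
  proof
    assume nz0: "poly (acp n) z = 0"
    obtain m where m: "m \<noteq> 0" "poly (acp m) z = 0" "degree m > 0"
      "\<And>q. poly (acp q) z = 0 \<Longrightarrow> m dvd q" using minpoly_exists[OF nd(1) dz] by blast
    obtain d' where d': "d = m * d'" using m(4)[OF dz] by (auto elim: dvdE)
    obtain n' where n': "n = m * n'" using m(4)[OF nz0] by (auto elim: dvdE)
    have d'0: "d' \<noteq> 0" using d' nd(1) by auto
    have "c = to_fract n' / to_fract d'"
      using nd(2) m(1) d'0 unfolding d' n' by (simp add: to_fract_mult)
    hence "degree d \<le> degree d'" using mind d'0 by blast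
    moreover have "degree d = degree m + degree d'" unfolding d' using m(1) d'0 by (simp add: degree_mult_eq)
    ultimately show False using m(3) by simp
  qed
  have n0: "n \<noteq> 0" using nz by auto
  have "qval (evalR c z) = qval (Fv (acp n) z) - qval (Fv (acp d) z)"
    using nd(1,2) by (simp add: evalR_eq qval_divide Fv_acp_nz)
  also have "\<dots> = - qval (Fv (acp d) z)" using qval_Fv_0[OF nz] by simp
  finally show ?thesis using qval_Fv_pos[of "acp d" z] dz nd(1) acp_eq_0[of d]
    by (simp add: qval_Fv split: if_splits)
qed

lemma inLoc_iff_qval: "inLoc z c \<longleftrightarrow> 0 \<le> qval (evalR c z)"
  using inLoc_qval not_inLoc_qval by (meson not_le)

section \<open>The operator S\<close>

lemma sigmaR_shR_inv: "sigmaR (shR (-1) x) = x"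
  by (simp add: sigmaR_shR shR_shR shR_zero_idx)

lemma shR_inv_sigmaR: "shR (-1) (sigmaR x) = x"
  by (simp add: sigmaR_shR shR_shR shR_zero_idx)

lemma Aelt_Sop: "Aelt r (Sop l r c)"
  unfolding Aelt_def Sop_def by simp

lemma Aelt_lincomb: "(\<And>j. j < r \<Longrightarrow> Aelt r (V j)) \<Longrightarrow> Aelt r (lincomb r a V)"
  unfolding Aelt_def lincomb_def by simp

lemma lincomb_cong: "(\<And>j. j < r \<Longrightarrow> a j = b j) \<Longrightarrow> lincomb r a V = lincomb r b V"
  unfolding lincomb_def by (intro ext sum.cong) auto

lemma lincomb_lincomb:
  "lincomb r a (\<lambda>j. lincomb r (B j) V) = lincomb r (\<lambda>k. \<Sum>j<r. a j * B j k) V"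
proof (rule ext)
  fix i
  have "(\<Sum>j<r. a j * (\<Sum>k<r. B j k * V k i)) = (\<Sum>j<r. \<Sum>k<r. a j * B j k * V k i)"
    by (simp add: sum_distrib_left mult.assoc)
  also have "\<dots> = (\<Sum>k<r. \<Sum>j<r. a j * B j k * V k i)" by (rule sum.swap)
  also have "\<dots> = (\<Sum>k<r. (\<Sum>j<r. a j * B j k) * V k i)" by (simp add: sum_distrib_right)
  finally show "lincomb r a (\<lambda>j. lincomb r (B j) V) i = lincomb r (\<lambda>k. \<Sum>j<r. a j * B j k) V i"
    unfolding lincomb_def .
qed

lemma sigmaR_sum: "sigmaR (sum f A) = (\<Sum>x\<in>A. sigmaR (f x))"
  by (simp add: sigmaR_shR shR_sum)
lemma sigmaR_mult: "sigmaR (a * b) = sigmaR a * sigmaR b"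
  by (simp add: sigmaR_shR shR_mult)

lemma Sop_lincomb:
  "Sop l r (lincomb r a V) = lincomb r (\<lambda>j. sigmaR (a j)) (\<lambda>j. Sop l r (V j))"
proof (rule ext)
  fix k
  have s: "sigmaR (lincomb r a V i) = (\<Sum>j<r. sigmaR (a j) * sigmaR (V j i))" for i
    unfolding lincomb_def by (simp add: sigmaR_sum sigmaR_mult)
  show "Sop l r (lincomb r a V) k = lincomb r (\<lambda>j. sigmaR (a j)) (\<lambda>j. Sop l r (V j)) k"
    unfolding Sop_def lincomb_def
    by (simp add: s[unfolded lincomb_def] sum_distrib_right sum_subtractf right_diff_distrib mult.assoc sum_divide_distrib)
qed

lemma Sop_inj:
  assumes "l 0 \<noteq> 0" "l r \<noteq> 0" "Sop l r c = Sop l r d" "j < r"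
  shows "c j = d j"
proof -
  have "Sop l r c 0 = Sop l r d 0" using assms by simp
  hence "sigmaR (c (r - 1)) * to_fract (l 0) / to_fract (l r) = sigmaR (d (r - 1)) * to_fract (l 0) / to_fract (l r)"
    unfolding Sop_def using assms(4) by simp
  hence cr: "sigmaR (c (r - 1)) = sigmaR (d (r - 1))" using assms(1,2) by (simp add: field_simps)
  show ?thesis
  proof (cases "j = r - 1")
    case True
    thus ?thesis using cr by (metis shR_inv_sigmaR)
  next
    case False
    have sj: "Suc j < r" using assms(4) False by arith
    have "Sop l r c (j + 1) = Sop l r d (j + 1)" using assms by simp
    hence "sigmaR (c j) - sigmaR (c (r - 1)) * to_fract (l (j+1)) / to_fract (l r) =
           sigmaR (d j) - sigmaR (d (r - 1)) * to_fract (l (j+1)) / to_fract (l r)"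
      unfolding Sop_def using sj by simp
    hence "sigmaR (c j) = sigmaR (d j)" using cr by simp
    thus ?thesis by (metis shR_inv_sigmaR)
  qed
qed

definition Sinv :: "(nat \<Rightarrow> 'a::field_char_0 poly) \<Rightarrow> nat \<Rightarrow> (nat \<Rightarrow> 'a ratf) \<Rightarrow> nat \<Rightarrow> 'a ratf" where
  "Sinv l r c = (\<lambda>j. if j < r then
      (if j = r - 1 then shR (-1) (- c 0 * to_fract (l r) / to_fract (l 0))
       else shR (-1) (c (j + 1) - c 0 * to_fract (l (j + 1)) / to_fract (l 0)))
     else 0)"

lemma Aelt_Sinv: "Aelt r (Sinv l r c)"
  unfolding Aelt_def Sinv_def by simp

lemma Sop_Sinv:
  assumes "l 0 \<noteq> 0" "l r \<noteq> 0" "Aelt r c"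
  shows "Sop l r (Sinv l r c) = c"
proof (rule ext)
  fix k
  show "Sop l r (Sinv l r c) k = c k"
  proof (cases "k < r")
    case False then show ?thesis using assms(3) unfolding Sop_def Aelt_def by simp
  next
    case True
    have r: "r > 0" using True by simp
    have g: "sigmaR (Sinv l r c (r - 1)) = - c 0 * to_fract (l r) / to_fract (l 0)"
      unfolding Sinv_def using r by (simp add: sigmaR_shR_inv)
    show ?thesis
    proof (cases "k = 0")
      case True
      then show ?thesis unfolding Sop_def using r g assms(1,2) by simp
    next
      case False
      have k1: "k - 1 < r" "k - 1 \<noteq> r - 1" "k - 1 + 1 = k" using False \<open>k < r\<close> by arith+
      have "sigmaR (Sinv l r c (k - 1)) = c k - c 0 * to_fract (l k) / to_fract (l 0)"
        unfolding Sinv_def using k1 by (simp only: if_True if_False sigmaR_shR_inv)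
      moreover have "Sop l r (Sinv l r c) k = sigmaR (Sinv l r c (k - 1)) -
          sigmaR (Sinv l r c (r - 1)) * to_fract (l k) / to_fract (l r)"
        unfolding Sop_def using \<open>k < r\<close> False by simp
      ultimately show ?thesis unfolding g using assms(1,2) by (simp add: field_simps)
    qed
  qed
qed

lemma basis_unique:
  assumes "isBasis r W" "lincomb r a W = lincomb r b W" "j < r"
  shows "a j = b j"
proof -
  define a' where "a' = (\<lambda>j. if j < r then a j else 0)"
  define b' where "b' = (\<lambda>j. if j < r then b j else 0)"
  have la: "lincomb r a' W = lincomb r a W" by (rule lincomb_cong) (simp add: a'_def)
  have lb: "lincomb r b' W = lincomb r b W" by (rule lincomb_cong) (simp add: b'_def)
  have Ae: "Aelt r (lincomb r a W)" using assms(1) unfolding isBasis_def by (intro Aelt_lincomb) auto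
  have ex1: "\<exists>!x. (\<forall>j\<ge>r. x j = 0) \<and> lincomb r a W = lincomb r x W"
    using assms(1) Ae unfolding isBasis_def by blast
  have Pa: "(\<forall>j\<ge>r. a' j = 0) \<and> lincomb r a W = lincomb r a' W" using la by (simp add: a'_def)
  have Pb: "(\<forall>j\<ge>r. b' j = 0) \<and> lincomb r a W = lincomb r b' W" using lb assms(2) by (simp add: b'_def)
  have "a' = b'" using ex1 Pa Pb by blast
  hence "a' j = b' j" by simp
  thus ?thesis using assms(3) by (simp add: a'_def b'_def)
qed

lemma Sbasis_unique:
  assumes "isBasis r W" "l 0 \<noteq> 0" "l r \<noteq> 0"
    "lincomb r a (\<lambda>j. Sop l r (W j)) = lincomb r b (\<lambda>j. Sop l r (W j))" "j < r"
  shows "a j = b j"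
proof -
  have e: "lincomb r x (\<lambda>j. Sop l r (W j)) = Sop l r (lincomb r (\<lambda>j. shR (-1) (x j)) W)" for x
    by (simp add: Sop_lincomb sigmaR_shR_inv)
  have "\<And>i. i < r \<Longrightarrow> lincomb r (\<lambda>j. shR (-1) (a j)) W i = lincomb r (\<lambda>j. shR (-1) (b j)) W i"
    using Sop_inj[OF assms(2,3)] assms(4) unfolding e by blast
  moreover have "Aelt r (lincomb r x W)" for x
    using assms(1) unfolding isBasis_def by (intro Aelt_lincomb) auto
  ultimately have "lincomb r (\<lambda>j. shR (-1) (a j)) W = lincomb r (\<lambda>j. shR (-1) (b j)) W"
    unfolding Aelt_def by (intro ext, case_tac "x < r") auto
  hence "shR (-1) (a j) = shR (-1) (b j)" using basis_unique[OF assms(1) _ assms(5)] by blast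
  thus ?thesis by (rule shR_inj)
qed

lemma liminf_shift_Suc: "liminf (\<lambda>n. u (Suc n)) = liminf (u :: nat \<Rightarrow> 'b::complete_linorder)"
proof -
  have "(INF m\<in>{n+1..}. u m) = (INF m\<in>{n..}. u (m + 1))" for n
    by (rule INF_eq) (use Suc_le_D in auto)
  then have a: "(SUP n. INF m\<in>{n..}. u (m + 1)) = (SUP n. (INF m\<in>{n+1..}. u m))" by auto
  have b: "(SUP n. (INF m\<in>{n+1..}. u m)) = (SUP n\<in>{1..}. (INF m\<in>{n..}. u m))"
    by (rule SUP_eq) (use Suc_le_D in auto)
  have "(SUP n\<in>{1..}. v n) = (SUP n. v n)" if "incseq v" for v::"nat \<Rightarrow> 'b"
    by (rule SUP_eq) (use \<open>incseq v\<close> incseq_Suc_iff in auto)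
  moreover have "incseq (\<lambda>n. (INF m\<in>{n..}. u m))" by (simp add: INF_superset_mono mono_def)
  ultimately have c: "(SUP n\<in>{1..}. (INF m\<in>{n..}. u m)) = (SUP n. (INF m\<in>{n..}. u m))" by simp
  have "(SUP n. Inf (u ` {n..})) = (SUP n. INF m\<in>{n..}. u (m + 1))" using a b c by simp
  then show ?thesis by (auto cong: liminf_SUP_INF)
qed

lemma Sol_shift: "b \<in> Sol l r \<alpha> \<Longrightarrow> (\<lambda>n. b (n + 1)) \<in> Sol l r (\<alpha> + 1)"
proof -
  assume b: "b \<in> Sol l r \<alpha>"
  show ?thesis unfolding Sol_def
  proof (intro CollectI allI)
    fix n :: int
    have e: "\<alpha> + 1 + of_int n = \<alpha> + of_int (n + 1)" by simp
    have "(\<Sum>i\<le>r. evalR (to_fract (l i)) (\<alpha> + of_int (n + 1)) * b (n + 1 + int i)) = 0"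
      using b unfolding Sol_def by blast
    thus "(\<Sum>i\<le>r. evalR (to_fract (l i)) (\<alpha> + 1 + of_int n) * b (n + int i + 1)) = 0"
      unfolding e by (simp add: ac_simps)
  qed
qed

lemma Sol_unshift: "b \<in> Sol l r (\<alpha> + 1) \<Longrightarrow> (\<lambda>n. b (n - 1)) \<in> Sol l r \<alpha>"
proof -
  assume b: "b \<in> Sol l r (\<alpha> + 1)"
  show ?thesis unfolding Sol_def
  proof (intro CollectI allI)
    fix n :: int
    have e: "\<alpha> + 1 + of_int (n - 1) = \<alpha> + of_int n" by simp
    have "(\<Sum>i\<le>r. evalR (to_fract (l i)) (\<alpha> + 1 + of_int (n - 1)) * b (n - 1 + int i)) = 0"
      using b unfolding Sol_def by blast
    thus "(\<Sum>i\<le>r. evalR (to_fract (l i)) (\<alpha> + of_int n) * b (n + int i - 1)) = 0"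
      unfolding e by (simp add: algebra_simps)
  qed
qed

lemma Sol_image: "(\<lambda>b n. b (n + 1)) ` Sol l r \<alpha> = Sol l r (\<alpha> + 1)"
proof
  show "(\<lambda>b n. b (n + 1)) ` Sol l r \<alpha> \<subseteq> Sol l r (\<alpha> + 1)" using Sol_shift by blast
  show "Sol l r (\<alpha> + 1) \<subseteq> (\<lambda>b n. b (n + 1)) ` Sol l r \<alpha>"
  proof
    fix b assume "b \<in> Sol l r (\<alpha> + 1)"
    hence "(\<lambda>n. b (n - 1)) \<in> Sol l r \<alpha>" by (rule Sol_unshift)
    thus "b \<in> (\<lambda>b n. b (n + 1)) ` Sol l r \<alpha>" by (intro image_eqI[of _ _ "\<lambda>n. b (n - 1)"]) auto
  qed
qed

lemma evalR_sigmaR: "evalR (sigmaR c) z = evalR c (z + 1)"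
  using evalR_shR[of 1 c z] by (simp add: sigmaR_shR)

lemma actAt_Sop:
  assumes lr: "l r \<noteq> 0" and b: "b \<in> Sol l r \<alpha>"
  shows "actAt r (Sop l r f) \<alpha> b = actAt r f (\<alpha> + 1) (\<lambda>n. b (n + 1))"
proof (cases r)
  case 0 then show ?thesis unfolding actAt_def by simp
next
  case (Suc m)
  define E where "E = (\<lambda>i. evalR (to_fract (l i)) \<alpha>)"
  define F where "F = (\<lambda>j. evalR (f j) (\<alpha> + 1))"
  have Er: "E r \<noteq> 0" unfolding E_def using lr by (simp add: evalR_nz)
  have "\<forall>n::int. (\<Sum>i\<le>r. evalR (to_fract (l i)) (\<alpha> + of_int n) * b (n + int i)) = 0"
    using b unfolding Sol_def by blast
  from this[rule_format, of 0] have rec: "(\<Sum>i\<le>r. E i * b (int i)) = 0"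
    unfolding E_def by simp
  have "(\<Sum>i\<le>r. E i * b (int i)) = (\<Sum>k<r. E k * b (int k)) + E r * b (int r)"
    by (simp add: lessThan_Suc_atMost[symmetric])
  hence rec2: "(\<Sum>k<r. E k * b (int k)) = - E r * b (int r)"
    using rec by (simp add: add_eq_0_iff)
  have ev: "evalR (Sop l r f k) \<alpha> = (if k < r then (if k = 0 then 0 else F (k - 1)) - F (r - 1) * E k / E r else 0)" for k
    unfolding Sop_def F_def E_def
    by (simp add: evalR_diff evalR_mult evalR_divide evalR_sigmaR evalR_0)
  have "actAt r (Sop l r f) \<alpha> b = (\<Sum>k<r. ((if k = 0 then 0 else F (k - 1)) - F (r - 1) * E k / E r) * b (int k))"
    unfolding actAt_def by (intro sum.cong) (simp_all add: ev)
  also have "\<dots> = (\<Sum>k<r. (if k = 0 then 0 else F (k - 1)) * b (int k) - F (r - 1) / E r * (E k * b (int k)))"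
    by (intro sum.cong refl) (simp add: algebra_simps)
  also have "\<dots> = (\<Sum>k<r. (if k = 0 then 0 else F (k - 1)) * b (int k)) - F (r - 1) / E r * (\<Sum>k<r. E k * b (int k))"
    by (simp only: sum_subtractf sum_distrib_left)
  also have "\<dots> = (\<Sum>k<m. F k * b (int k + 1)) + F m * b (int m + 1)"
  proof -
    have sh: "(\<Sum>k<Suc m. (if k = 0 then 0 else F (k - 1)) * b (int k)) = (\<Sum>k<m. F k * b (int k + 1))"
      by (subst sum.lessThan_Suc_shift) (simp add: add.commute)
    show ?thesis unfolding rec2 unfolding Suc sh using Er[unfolded Suc] by (simp add: add.commute)
  qed
  also have "\<dots> = (\<Sum>k<r. F k * b (int k + 1))"
    unfolding Suc by simp
  also have "\<dots> = actAt r f (\<alpha> + 1) (\<lambda>n. b (n + 1))"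
    unfolding actAt_def F_def by simp
  finally show ?thesis .
qed

lemma liminf_term_shift:
  "Liminf sequentially (\<lambda>n::nat. qval (b (1 - int n))) = Liminf sequentially (\<lambda>n::nat. qval (b (- int n)))"
proof -
  have "Liminf sequentially (\<lambda>n::nat. qval (b (- int n))) = Liminf sequentially (\<lambda>n::nat. qval (b (1 - int (Suc n))))"
    by simp
  also have "\<dots> = Liminf sequentially (\<lambda>n::nat. qval (b (1 - int n)))"
    by (rule liminf_shift_Suc[of "\<lambda>n. qval (b (1 - int n))"])
  finally show ?thesis by simp
qed

lemma valAt_Sop:
  assumes "l r \<noteq> 0"
  shows "valAt l r \<alpha> (Sop l r f) = valAt l r (\<alpha> + 1) f"
proof -
  have "valAt l r \<alpha> (Sop l r f) = (INF b\<in>Sol l r \<alpha>. qval (actAt r f (\<alpha> + 1) (\<lambda>n. b (n + 1))) -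
      Liminf sequentially (\<lambda>n::nat. qval ((\<lambda>n. b (n + 1)) (- int n))))"
    unfolding valAt_def by (intro INF_cong refl) (simp add: actAt_Sop[of l r, OF assms] liminf_term_shift)
  also have "\<dots> = (INF b'\<in>(\<lambda>b n. b (n + 1)) ` Sol l r \<alpha>. qval (actAt r f (\<alpha> + 1) b') -
      Liminf sequentially (\<lambda>n::nat. qval (b' (- int n))))"
    by (simp add: image_comp)
  also have "\<dots> = valAt l r (\<alpha> + 1) f" unfolding Sol_image valAt_def ..
  finally show ?thesis .
qed

section \<open>Existence of solutions with prescribed initial values\<close>

definition stepF :: "nat \<Rightarrow> (nat \<Rightarrow> int \<Rightarrow> 'b::field) \<Rightarrow> int \<Rightarrow> (nat \<Rightarrow> 'b) \<Rightarrow> nat \<Rightarrow> 'b" where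
  "stepF r E n w = (\<lambda>i. if i < r - 1 then w (i + 1) else - (\<Sum>j<r. E j n * w j) / E r n)"

definition stepB :: "nat \<Rightarrow> (nat \<Rightarrow> int \<Rightarrow> 'b::field) \<Rightarrow> int \<Rightarrow> (nat \<Rightarrow> 'b) \<Rightarrow> nat \<Rightarrow> 'b" where
  "stepB r E n w = (\<lambda>i. if i = 0 then - (\<Sum>j<r. E (Suc j) n * w j) / E 0 n else w (i - 1))"

primrec fwin :: "nat \<Rightarrow> (nat \<Rightarrow> int \<Rightarrow> 'b::field) \<Rightarrow> (nat \<Rightarrow> 'b) \<Rightarrow> nat \<Rightarrow> nat \<Rightarrow> 'b" where
  "fwin r E v 0 = v"
| "fwin r E v (Suc m) = stepF r E (int m) (fwin r E v m)"

primrec bwin :: "nat \<Rightarrow> (nat \<Rightarrow> int \<Rightarrow> 'b::field) \<Rightarrow> (nat \<Rightarrow> 'b) \<Rightarrow> nat \<Rightarrow> nat \<Rightarrow> 'b" where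
  "bwin r E v 0 = v"
| "bwin r E v (Suc m) = stepB r E (- int (Suc m)) (bwin r E v m)"

definition win :: "nat \<Rightarrow> (nat \<Rightarrow> int \<Rightarrow> 'b::field) \<Rightarrow> (nat \<Rightarrow> 'b) \<Rightarrow> int \<Rightarrow> nat \<Rightarrow> 'b" where
  "win r E v n = (if 0 \<le> n then fwin r E v (nat n) else bwin r E v (nat (- n)))"

lemma stepF_stepB:
  assumes "r > 0" "E 0 n \<noteq> 0" "E r n \<noteq> 0" "i < r"
  shows "stepF r E n (stepB r E n w) i = w i"
proof (cases "i < r - 1")
  case True
  then show ?thesis unfolding stepF_def stepB_def by simp
next
  case False
  hence i: "i = r - 1" using assms(4) by simp
  obtain m where m: "r = Suc m" using assms(1) by (cases r) auto
  have "(\<Sum>j<r. E j n * stepB r E n w j) = E 0 n * stepB r E n w 0 + (\<Sum>j<m. E (Suc j) n * w j)"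
    unfolding m by (subst sum.lessThan_Suc_shift) (simp add: stepB_def)
  also have "\<dots> = - (E r n * w m)"
    using assms(2) unfolding stepB_def m by (simp add: sum.lessThan_Suc)
  finally show ?thesis unfolding stepF_def using i m assms(3) by simp
qed

lemma win_step:
  assumes "r > 0" "\<And>n. E 0 n \<noteq> 0" "\<And>n. E r n \<noteq> 0" "i < r"
  shows "win r E v (n + 1) i = stepF r E n (win r E v n) i"
proof (cases "0 \<le> n")
  case True
  have "nat (n + 1) = Suc (nat n)" using True by simp
  thus ?thesis unfolding win_def using True by simp
next
  case False
  define N where "N = nat (- n - 1)"
  have nN: "n = - int (Suc N)" using False unfolding N_def by simp
  have w1: "win r E v (n + 1) = bwin r E v N"
  proof (cases N)
    case 0 then show ?thesis unfolding win_def nN by simp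
  next
    case (Suc k)
    have "nat (int k + 1) = Suc k" by arith
    then show ?thesis unfolding win_def nN Suc by simp
  qed
  have w0: "win r E v n = stepB r E n (bwin r E v N)"
  proof -
    have "nat (int N + 1) = Suc N" by arith
    thus ?thesis unfolding win_def nN by simp
  qed
  show ?thesis unfolding w1 w0 using stepF_stepB[OF assms(1) assms(2) assms(3) assms(4)] by simp
qed

lemma solution_exists:
  fixes E :: "nat \<Rightarrow> int \<Rightarrow> 'b::field"
  assumes "r > 0" "\<And>n. E 0 n \<noteq> 0" "\<And>n. E r n \<noteq> 0"
  shows "\<exists>b. (\<forall>n. (\<Sum>i\<le>r. E i n * b (n + int i)) = 0) \<and> (\<forall>i<r. b (int i) = v i)"
proof -
  define b where "b = (\<lambda>n. win r E v n 0)"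
  have ws: "\<And>n i. i < r \<Longrightarrow> win r E v (n + 1) i = stepF r E n (win r E v n) i"
    by (rule win_step) (use assms in auto)
  have sh: "win r E v (n + 1) i = win r E v n (i + 1)" if "i + 1 < r" for n i
    using ws[of i n] that unfolding stepF_def by simp
  have wb: "\<And>n. win r E v n i = b (n + int i)" if "i < r" for i
    using that
  proof (induction i)
    case 0 then show ?case by (simp add: b_def)
  next
    case (Suc i)
    have "win r E v n (Suc i) = win r E v (n + 1) i" using sh[of i n] Suc.prems by simp
    also have "\<dots> = b (n + 1 + int i)" using Suc by simp
    finally show ?case by (simp add: add.assoc)
  qed
  have rec: "(\<Sum>i\<le>r. E i n * b (n + int i)) = 0" for n
  proof -
    obtain m where m: "r = Suc m" using assms(1) by (cases r) auto
    have "b (n + int r) = win r E v (n + 1) m"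
      using wb[of m "n + 1"] m by (simp add: add.assoc)
    also have "\<dots> = - (\<Sum>j<r. E j n * win r E v n j) / E r n"
      using ws[of m n] m unfolding stepF_def by simp
    also have "\<dots> = - (\<Sum>j<r. E j n * b (n + int j)) / E r n"
      using wb by (simp add: sum.cong[OF refl, of _ "\<lambda>j. E j n * win r E v n j" "\<lambda>j. E j n * b (n + int j)"])
    finally have "E r n * b (n + int r) = - (\<Sum>j<r. E j n * b (n + int j))"
      using assms(3)[of n] by simp
    moreover have "(\<Sum>i\<le>r. E i n * b (n + int i)) = (\<Sum>j<r. E j n * b (n + int j)) + E r n * b (n + int r)"
      by (simp add: lessThan_Suc_atMost[symmetric])
    ultimately show ?thesis by simp
  qed
  have ini: "b (int i) = v i" if "i < r" for i
    using wb[OF that, of 0] by (simp add: win_def)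
  show ?thesis using rec ini by blast
qed

section \<open>Integrality near the bottom of an orbit\<close>

lemma qval_E_ge0: "0 \<le> qval (evalR (to_fract p) z)"
  by (simp add: evalR_to_fract qval_Fv_ge0)

lemma qval_E_0: "poly (acp p) z \<noteq> 0 \<Longrightarrow> qval (evalR (to_fract p) z) = 0"
  by (simp add: evalR_to_fract qval_Fv_0)

lemma qval_one: "qval (1 :: 'b::field fls) = 0"
  unfolding qval_def by (simp add: zero_ereal_def)

lemma neg_shift: "z + of_int (- int (Suc N)) = z - of_nat (Suc N)"
  by simp

lemma integral_imp_Loc:
  assumes r0: "r > 0" and l0: "l 0 \<noteq> 0" and lr: "l r \<noteq> 0"
    and nrb: "\<And>n::nat. n > 0 \<Longrightarrow> poly (acp (l 0)) (z - of_nat n) \<noteq> 0"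
    and int: "integralAt l r z c" and k: "k < r"
  shows "inLoc z (c k)"
proof (rule ccontr)
  assume nl: "\<not> inLoc z (c k)"
  define E where "E = (\<lambda>i (n::int). evalR (to_fract (l i)) (z + of_int n))"
  have E0: "E 0 n \<noteq> 0" for n unfolding E_def using l0 by (simp add: evalR_nz)
  have Er: "E r n \<noteq> 0" for n unfolding E_def using lr by (simp add: evalR_nz)
  define v where "v = (\<lambda>i. if i = k then 1 else (0 :: 'a alg_closure fls))"
  obtain b where b: "\<forall>n. (\<Sum>i\<le>r. E i n * b (n + int i)) = 0" "\<forall>i<r. b (int i) = v i"
    using solution_exists[OF r0, of E, OF E0 Er] by blast
  have bs: "b \<in> Sol l r z" unfolding Sol_def using b(1) unfolding E_def by blast
  have act: "actAt r c z b = evalR (c k) z"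
  proof -
    have "actAt r c z b = (\<Sum>i<r. if i = k then evalR (c i) z else 0)"
      unfolding actAt_def using b(2) by (intro sum.cong) (auto simp: v_def)
    also have "\<dots> = evalR (c k) z" using k by simp
    finally show ?thesis .
  qed
  have Q: "\<forall>n. - int N \<le> n \<and> n < int r \<longrightarrow> 0 \<le> qval (b n)" for N
  proof (induction N)
    case 0
    show ?case
    proof (intro allI impI)
      fix n :: int assume "- int 0 \<le> n \<and> n < int r"
      then obtain i where i: "n = int i" "i < r" by (metis add.inverse_neutral int_nat_eq nat_less_iff of_nat_0)
      show "0 \<le> qval (b n)" using b(2) i by (simp add: v_def qval_one qval_def)
    qed
  next
    case (Suc N)
    show ?case
    proof (intro allI impI)
      fix n :: int assume n: "- int (Suc N) \<le> n \<and> n < int r"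
      show "0 \<le> qval (b n)"
      proof (cases "n = - int (Suc N)")
        case False then show ?thesis using Suc.IH n by auto
      next
        case True
        obtain m where m: "r = Suc m" using r0 by (cases r) auto
        have "(\<Sum>i\<le>r. E i n * b (n + int i)) = 0" using b(1) by blast
        hence "E 0 n * b n + (\<Sum>i\<le>m. E (Suc i) n * b (n + int (Suc i))) = 0"
          unfolding m sum.atMost_Suc_shift by simp
        hence eq: "E 0 n * b n = - (\<Sum>i\<le>m. E (Suc i) n * b (n + int (Suc i)))"
          by (simp add: eq_neg_iff_add_eq_0)
        have "0 \<le> qval (\<Sum>i\<le>m. E (Suc i) n * b (n + int (Suc i)))"
        proof (rule qval_sum)
          fix i assume "i \<in> {..m}"
          hence "- int N \<le> n + int (Suc i) \<and> n + int (Suc i) < int r" using True m by auto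
          hence "0 \<le> qval (b (n + int (Suc i)))" using Suc.IH by blast
          moreover have "0 \<le> qval (E (Suc i) n)" unfolding E_def by (rule qval_E_ge0)
          ultimately show "0 \<le> qval (E (Suc i) n * b (n + int (Suc i)))"
            by (simp add: qval_mult)
        qed
        hence "0 \<le> qval (E 0 n * b n)" unfolding eq qval_minus .
        moreover have "qval (E 0 n) = 0"
          unfolding E_def True neg_shift using nrb[of "Suc N"] by (intro qval_E_0) simp
        ultimately show ?thesis by (simp add: qval_mult)
      qed
    qed
  qed
  have lim: "0 \<le> Liminf sequentially (\<lambda>n::nat. qval (b (- int n)))"
  proof (rule Liminf_bounded, rule always_eventually, rule allI)
    fix x :: nat
    show "0 \<le> qval (b (- int x))" using Q[of x] r0 by auto
  qed
  have neg: "qval (actAt r c z b) < 0" unfolding act using not_inLoc_qval[OF nl] .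
  have fin: "qval (actAt r c z b) \<noteq> - \<infinity>" unfolding qval_def by simp
  have "qval (actAt r c z b) - Liminf sequentially (\<lambda>n::nat. qval (b (- int n))) < 0"
    using neg lim ereal_diff_le_self order.strict_trans1 by blast
  moreover have "valAt l r z c \<le> qval (actAt r c z b) - Liminf sequentially (\<lambda>n::nat. qval (b (- int n)))"
    unfolding valAt_def using bs by (rule INF_lower)
  ultimately show False using int unfolding integralAt_def by simp
qed

lemma liminf_le_frequent:
  fixes f :: "nat \<Rightarrow> ereal"
  assumes "\<And>N. \<exists>n\<ge>N. f n \<le> m"
  shows "Liminf sequentially f \<le> m"
  unfolding liminf_SUP_INF
proof (rule SUP_least)
  fix N :: nat
  obtain n where "n \<ge> N" "f n \<le> m" using assms by blast
  thus "Inf (f ` {N..}) \<le> m" by (intro INF_lower2[of n]) auto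
qed

lemma Loc_imp_integral:
  assumes r0: "r > 0" and lr: "l r \<noteq> 0"
    and nrb: "\<And>n::nat. n > 0 \<Longrightarrow> poly (acp (l r)) (z - of_nat n) \<noteq> 0"
    and loc: "\<And>i. i < r \<Longrightarrow> inLoc z (c i)"
  shows "integralAt l r z c"
  unfolding integralAt_def valAt_def
proof (rule INF_greatest)
  fix b assume bs: "b \<in> Sol l r z"
  define E where "E = (\<lambda>i (n::int). evalR (to_fract (l i)) (z + of_int n))"
  have rec: "\<And>n. (\<Sum>i\<le>r. E i n * b (n + int i)) = 0" using bs unfolding Sol_def E_def by blast
  define m where "m = Min ((\<lambda>i. qval (b (int i))) ` {..<r})"
  have fin: "finite ((\<lambda>i. qval (b (int i))) ` {..<r})" "(\<lambda>i. qval (b (int i))) ` {..<r} \<noteq> {}"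
    using r0 by auto
  have mle: "m \<le> qval (b (int i))" if "i < r" for i
    unfolding m_def using fin that by (intro Min_le) auto
  have A1: "m \<le> qval (actAt r c z b)"
    unfolding actAt_def
  proof (rule qval_sum)
    fix i assume "i \<in> {..<r}"
    hence "0 \<le> qval (evalR (c i) z)" "m \<le> qval (b (int i))" using inLoc_qval loc mle by auto
    thus "m \<le> qval (evalR (c i) z * b (int i))" unfolding qval_mult using add_mono by fastforce
  qed
  have claim: "\<exists>i<r. qval (b (- int N + int i)) \<le> m" for N
  proof (induction N)
    case 0
    have "m \<in> (\<lambda>i. qval (b (int i))) ` {..<r}" unfolding m_def using fin by (rule Min_in)
    then show ?case by auto
  next
    case (Suc N)
    then obtain i where i: "i < r" "qval (b (- int N + int i)) \<le> m" by blast
    show ?case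
    proof (cases "i + 1 < r")
      case True
      have "- int (Suc N) + int (i + 1) = - int N + int i" by simp
      then show ?thesis using True i by metis
    next
      case False
      hence ir: "i = r - 1" using i by simp
      define n where "n = - int (Suc N)"
      have bnr: "b (n + int r) = b (- int N + int i)" unfolding n_def ir using r0 by (simp add: of_nat_diff algebra_simps)
      show ?thesis
      proof (rule ccontr)
        assume "\<not> (\<exists>i<r. qval (b (- int (Suc N) + int i)) \<le> m)"
        hence gt: "\<And>j. j < r \<Longrightarrow> m < qval (b (n + int j))" unfolding n_def by auto
        define m' where "m' = Min ((\<lambda>j. qval (b (n + int j))) ` {..<r})"
        have fin': "finite ((\<lambda>j. qval (b (n + int j))) ` {..<r})" "(\<lambda>j. qval (b (n + int j))) ` {..<r} \<noteq> {}"
          using r0 by auto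
        have "m' \<in> (\<lambda>j. qval (b (n + int j))) ` {..<r}" unfolding m'_def using fin' by (rule Min_in)
        hence mm': "m < m'" using gt by auto
        have m'le: "m' \<le> qval (b (n + int j))" if "j < r" for j
          unfolding m'_def using fin' that by (intro Min_le) auto
        have "(\<Sum>i\<le>r. E i n * b (n + int i)) = (\<Sum>j<r. E j n * b (n + int j)) + E r n * b (n + int r)"
          by (simp add: lessThan_Suc_atMost[symmetric])
        hence eq: "E r n * b (n + int r) = - (\<Sum>j<r. E j n * b (n + int j))"
          using rec[of n] by (simp add: eq_neg_iff_add_eq_0 add.commute)
        have "m' \<le> qval (\<Sum>j<r. E j n * b (n + int j))"
        proof (rule qval_sum)
          fix j assume "j \<in> {..<r}"
          hence "0 \<le> qval (E j n)" "m' \<le> qval (b (n + int j))" unfolding E_def using qval_E_ge0 m'le by auto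
          thus "m' \<le> qval (E j n * b (n + int j))" unfolding qval_mult using add_mono by fastforce
        qed
        hence "m' \<le> qval (E r n * b (n + int r))" unfolding eq qval_minus .
        moreover have "qval (E r n) = 0"
          unfolding E_def n_def neg_shift using nrb[of "Suc N"] by (intro qval_E_0) simp
        ultimately have "m' \<le> qval (b (n + int r))" by (simp add: qval_mult)
        thus False using mm' i(2) bnr by simp
      qed
    qed
  qed
  have "Liminf sequentially (\<lambda>n::nat. qval (b (- int n))) \<le> m"
  proof (rule liminf_le_frequent)
    fix N
    obtain i where i: "i < r" "qval (b (- int (N + r) + int i)) \<le> m" using claim by blast
    have "- int (N + r) + int i = - int (N + r - i)" using i(1) by simp
    hence "qval (b (- int (N + r - i))) \<le> m" using i(2) by simp
    thus "\<exists>n\<ge>N. qval (b (- int n)) \<le> m" using i(1) by (intro exI[of _ "N + r - i"]) auto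
  qed
  hence "Liminf sequentially (\<lambda>n::nat. qval (b (- int n))) \<le> qval (actAt r c z b)" using A1 by simp
  thus "0 \<le> qval (actAt r c z b) - Liminf sequentially (\<lambda>n::nat. qval (b (- int n)))"
    by (simp add: ereal_diff_positive)
qed

lemma isRoot_iff: "isRoot l r \<rho> \<longleftrightarrow> poly (acp (l 0)) \<rho> = 0 \<or> poly (acp (l r)) \<rho> = 0"
  unfolding isRoot_def by (simp add: acp_mult)

lemma orb_O1:
  assumes "z \<in> Zset l r B" "z \<notin> B"
  shows "z + 1 \<in> Zset l r B"
proof -
  obtain \<beta> \<rho> where h: "\<beta> \<in> B" "leOrb z \<beta>" "isRoot l r \<rho>" "ltOrb \<rho> z"
    using assms(1) unfolding Zset_def by blast
  obtain n where n: "\<beta> = z + of_nat n" using h(2) unfolding leOrb_def by blast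
  have "n \<noteq> 0" using n h(1) assms(2) by (metis add.right_neutral of_nat_0)
  hence "leOrb (z + 1) \<beta>" unfolding leOrb_def n by (intro exI[of _ "n - 1"]) (simp add: of_nat_diff)
  moreover obtain k where k: "k > 0" "z = \<rho> + of_nat k" using h(4) unfolding ltOrb_def by blast
  hence "ltOrb \<rho> (z + 1)" unfolding ltOrb_def by (intro exI[of _ "k + 1"]) (simp add: add.assoc)
  ultimately show ?thesis unfolding Zset_def using h(1,3) by blast
qed

lemma orb_O2:
  assumes adm: "admissibleBetas l r B" and "z \<notin> Zset l r B" "z + 1 \<notin> Zset l r B" "z \<notin> B"
  shows "\<not> isRoot l r z"
proof
  assume rt: "isRoot l r z"
  then obtain \<beta> where \<beta>: "\<beta> \<in> B" "sameOrb z \<beta>" using adm unfolding admissibleBetas_def by blast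
  hence "leOrb z \<beta>" using adm rt unfolding admissibleBetas_def by blast
  then obtain n where n: "\<beta> = z + of_nat n" unfolding leOrb_def by blast
  have "n \<noteq> 0" using n \<beta>(1) assms(4) by (metis add.right_neutral of_nat_0)
  hence "leOrb (z + 1) \<beta>" unfolding leOrb_def n by (intro exI[of _ "n - 1"]) (simp add: of_nat_diff)
  moreover have "ltOrb z (z + 1)" unfolding ltOrb_def by (intro exI[of _ 1]) simp
  ultimately have "z + 1 \<in> Zset l r B" unfolding Zset_def using \<beta>(1) rt by blast
  thus False using assms(3) by simp
qed

lemma orb_O3:
  assumes "z \<notin> Zset l r B" "z + 1 \<in> Zset l r B" "n > 0"
  shows "\<not> isRoot l r (z - of_nat n)"
proof
  assume rt: "isRoot l r (z - of_nat n)"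
  obtain \<beta> where h: "\<beta> \<in> B" "leOrb (z + 1) \<beta>"
    using assms(2) unfolding Zset_def by blast
  obtain k where "\<beta> = z + 1 + of_nat k" using h(2) unfolding leOrb_def by blast
  hence "leOrb z \<beta>" unfolding leOrb_def by (intro exI[of _ "k + 1"]) (simp add: add.assoc add.commute)
  moreover have "ltOrb (z - of_nat n) z" unfolding ltOrb_def using assms(3) by (intro exI[of _ n]) simp
  ultimately have "z \<in> Zset l r B" unfolding Zset_def using h(1) rt by blast
  thus False using assms(1) by simp
qed

lemma orb_B_shift:
  assumes adm: "admissibleBetas l r B" and "z \<in> B" "z + of_int i \<in> B"
  shows "i = 0"
proof -
  obtain \<rho> where \<rho>: "isRoot l r \<rho>" "sameOrb \<rho> z" using adm assms(2) unfolding admissibleBetas_def by blast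
  have e: "\<rho> - (z + of_int i) = (\<rho> - z) - of_int i" by simp
  have "sameOrb \<rho> (z + of_int i)" unfolding sameOrb_def e
    using Ints_diff[OF \<rho>(2)[unfolded sameOrb_def] Ints_of_int] .
  hence "z = z + of_int i" using adm \<rho> assms(2,3) unfolding admissibleBetas_def by blast
  thus ?thesis by simp
qed

lemma lincomb_std: "lincomb r a stdbasis = (\<lambda>k. if k < r then a k else 0)"
proof (rule ext)
  fix k
  have "(\<Sum>j<r. a j * stdbasis j k) = (\<Sum>j<r. if k = j then a k else 0)"
    unfolding stdbasis_def by (intro sum.cong) auto
  also have "\<dots> = (if k < r then a k else 0)" by simp
  finally show "lincomb r a stdbasis k = (if k < r then a k else 0)" unfolding lincomb_def .
qed

lemma spanLoc_std_iff: "c \<in> spanLoc r \<alpha> stdbasis \<longleftrightarrow> Aelt r c \<and> (\<forall>k<r. inLoc \<alpha> (c k))"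
proof
  assume "c \<in> spanLoc r \<alpha> stdbasis"
  then obtain a where a: "c = lincomb r a stdbasis" "\<forall>j<r. inLoc \<alpha> (a j)" unfolding spanLoc_def by blast
  show "Aelt r c \<and> (\<forall>k<r. inLoc \<alpha> (c k))" using a unfolding lincomb_std Aelt_def by auto
next
  assume h: "Aelt r c \<and> (\<forall>k<r. inLoc \<alpha> (c k))"
  have "c = lincomb r c stdbasis" unfolding lincomb_std using h unfolding Aelt_def by (auto simp: not_less)
  thus "c \<in> spanLoc r \<alpha> stdbasis" unfolding spanLoc_def using h by blast
qed

lemma lincomb_delta: "i < r \<Longrightarrow> lincomb r (\<lambda>j. if j = i then 1 else 0) V = V i"
proof (rule ext)
  fix k assume i: "i < r"
  have "(\<Sum>j<r. (if j = i then 1 else 0) * V j k) = (\<Sum>j<r. if i = j then V i k else 0)"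
    by (intro sum.cong) auto
  also have "\<dots> = V i k" using i by simp
  finally show "lincomb r (\<lambda>j. if j = i then 1 else 0) V k = V i k" unfolding lincomb_def .
qed

lemma own_span: "i < r \<Longrightarrow> V i \<in> spanLoc r \<alpha> V"
  unfolding spanLoc_def using lincomb_delta[of i r V, symmetric]
  by (intro CollectI exI[of _ "\<lambda>j. if j = i then 1 else 0"]) (auto simp: inLoc_0 inLoc_1)

section \<open>Roots of denominators\<close>

lemma root_in_B:
  assumes e0: "e \<noteq> 0" and g: "gcdOne (insert e S)"
    and loc: "\<And>z. z \<notin> B \<Longrightarrow> \<forall>x\<in>S. inLoc z (to_fract x / to_fract e)"
    and ez: "poly (acp e) z = 0"
  shows "z \<in> B"
proof (rule ccontr)
  assume zB: "z \<notin> B"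
  obtain m where m: "m \<noteq> 0" "poly (acp m) z = 0" "degree m > 0"
    "\<And>q. poly (acp q) z = 0 \<Longrightarrow> m dvd q" using minpoly_exists[OF e0 ez] by blast
  have "m dvd x" if x: "x \<in> insert e S" for x
  proof (cases "x = e")
    case True then show ?thesis using m(4) ez by simp
  next
    case False
    hence "x \<in> S" using x by simp
    hence "inLoc z (to_fract x / to_fract e)" using loc zB by blast
    then obtain p q where pq: "poly (acp q) z \<noteq> 0" "to_fract x / to_fract e = to_fract p / to_fract q"
      unfolding inLoc_def by blast
    have q0: "q \<noteq> 0" using pq(1) by auto
    have "x * q = p * e" using pq(2) frac_eq_iff[OF e0 q0] by simp
    hence "poly (acp x) z * poly (acp q) z = poly (acp p) z * poly (acp e) z"
      by (metis acp_mult poly_mult)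
    hence "poly (acp x) z = 0" using ez pq(1) by simp
    thus ?thesis by (rule m(4))
  qed
  hence "is_unit m" using g unfolding gcdOne_def by blast
  thus False using m(3) is_unit_iff_degree[OF m(1)] by simp
qed

lemma shiftFree_of_roots:
  assumes adm: "admissibleBetas l r B" and e0: "e \<noteq> 0"
    and rts: "\<And>z. poly (acp e) z = 0 \<Longrightarrow> z \<in> B"
  shows "shiftFree e"
  unfolding shiftFree_def
proof (intro allI impI coprimeI)
  fix i :: int and c assume i0: "i \<noteq> 0" and c: "c dvd e" "c dvd shiftp i e"
  show "is_unit c"
  proof (rule ccontr)
    assume nu: "\<not> is_unit c"
    have c0: "c \<noteq> 0" using c(1) e0 by auto
    hence "degree c > 0" using nu is_unit_iff_degree by auto
    hence "degree (acp c) > 0" by (simp add: degree_map_poly)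
    then obtain w where w: "poly (acp c) w = 0" using alg_closed_imp_poly_has_root by blast
    have "poly (acp e) w = 0" using c(1) w by (metis acp_mult dvdE mult_eq_0_iff poly_mult)
    moreover have "poly (acp (shiftp i e)) w = 0" using c(2) w by (metis acp_mult dvdE mult_eq_0_iff poly_mult)
    hence "poly (acp e) (w + of_int i) = 0" by (simp add: poly_acp_shiftp)
    ultimately have "w \<in> B" "w + of_int i \<in> B" using rts by auto
    hence "i = 0" by (rule orb_B_shift[OF adm])
    thus False using i0 by simp
  qed
qed

lemma inv_scaled:
  assumes c0: "c \<noteq> 0"
    and h1: "\<And>i k. i < r \<Longrightarrow> k < r \<Longrightarrow> (\<Sum>j<r. Mf i j / c * P j k) = (if i = k then 1 else 0)"
    and h2: "\<And>i k. i < r \<Longrightarrow> k < r \<Longrightarrow> (\<Sum>j<r. P i j * (Mf j k / c)) = (if i = k then 1 else 0)"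
  shows "invertibleMat r (Mf :: nat \<Rightarrow> nat \<Rightarrow> 'a::field_char_0 ratf)"
  unfolding invertibleMat_def
proof (intro exI[of _ "\<lambda>j k. P j k / c"] conjI allI impI)
  fix i k assume "i < r" "k < r"
  show "(\<Sum>j<r. Mf i j * (P j k / c)) = (if i = k then 1 else 0)"
    using h1[OF \<open>i < r\<close> \<open>k < r\<close>] by (simp add: field_simps)
  show "(\<Sum>j<r. P i j / c * Mf j k) = (if i = k then 1 else 0)"
    using h2[OF \<open>i < r\<close> \<open>k < r\<close>] by (simp add: field_simps)
qed

lemma integralAt_Sop:
  assumes "l r \<noteq> 0"
  shows "integralAt l r z (Sop l r f) \<longleftrightarrow> integralAt l r (z + 1) f"
  unfolding integralAt_def valAt_Sop[where l=l and r=r, OF assms] ..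

lemma inLoc_sigmaR: "inLoc (z + 1) x \<Longrightarrow> inLoc z (sigmaR x)"
  unfolding sigmaR_shR by (rule inLoc_shR) simp

lemma inLoc_shR_m1: "inLoc z x \<Longrightarrow> inLoc (z + 1) (shR (-1) x)"
  by (rule inLoc_shR) simp

lemma part_i_loc:
  assumes l0: "l 0 \<noteq> 0" and lr: "l r \<noteq> 0" and adm: "admissibleBetas l r B"
    and suit: "suitable l r B W" and zB: "z \<notin> B" and i: "i < r"
  shows "Sop l r (W i) \<in> spanLoc r z W"
proof -
  have bas: "isBasis r W" and lib: "\<And>\<alpha>. \<alpha> \<in> Zset l r B \<Longrightarrow> localIntegralBasis l r \<alpha> W"
    and std: "\<And>\<alpha>. \<alpha> \<notin> Zset l r B \<Longrightarrow> spanLoc r \<alpha> W = spanLoc r \<alpha> stdbasis"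
    using suit unfolding suitable_def by auto
  have r0: "r > 0" using i by simp
  have AS: "Aelt r (Sop l r (W i))" by (rule Aelt_Sop)
  show ?thesis
  proof (cases "z + 1 \<in> Zset l r B")
    case True
    have "integralAt l r (z + 1) (W i)" using lib[OF True] i unfolding localIntegralBasis_def by blast
    hence intS: "integralAt l r z (Sop l r (W i))" using integralAt_Sop[where l=l and r=r, OF lr] by blast
    show ?thesis
    proof (cases "z \<in> Zset l r B")
      case True
      then show ?thesis using lib[OF True] AS intS unfolding localIntegralBasis_def by blast
    next
      case False
      have nrb: "\<And>n::nat. n > 0 \<Longrightarrow> poly (acp (l 0)) (z - of_nat n) \<noteq> 0"
        using orb_O3[OF False \<open>z + 1 \<in> Zset l r B\<close>] isRoot_iff by blast
      have "\<forall>k<r. inLoc z (Sop l r (W i) k)"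
        using integral_imp_Loc[where l=l and r=r, OF r0 l0 lr nrb intS] by blast
      hence "Sop l r (W i) \<in> spanLoc r z stdbasis" using AS by (simp add: spanLoc_std_iff)
      thus ?thesis using std[OF False] by simp
    qed
  next
    case False
    have zZ: "z \<notin> Zset l r B" using orb_O1[of z l r B] False zB by blast
    have nr: "poly (acp (l r)) z \<noteq> 0" using orb_O2[OF adm zZ False zB] isRoot_iff by blast
    have "W i \<in> spanLoc r (z + 1) stdbasis" using own_span[OF i] std[OF False] by blast
    hence wl: "\<forall>k<r. inLoc (z + 1) (W i k)" by (simp add: spanLoc_std_iff)
    have "\<forall>k<r. inLoc z (Sop l r (W i) k)"
    proof (intro allI impI)
      fix k assume k: "k < r"
      have a: "inLoc z (if k = 0 then 0 else sigmaR (W i (k - 1)))"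
        using wl k by (auto simp: inLoc_0 intro!: inLoc_sigmaR)
      have b: "inLoc z (sigmaR (W i (r - 1)) * to_fract (l k) / to_fract (l r))"
        using wl r0 nr by (intro inLoc_div inLoc_mult inLoc_sigmaR inLoc_to_fract) auto
      show "inLoc z (Sop l r (W i) k)" unfolding Sop_def using k inLoc_diff[OF a b] by simp
    qed
    hence "Sop l r (W i) \<in> spanLoc r z stdbasis" using AS by (simp add: spanLoc_std_iff)
    thus ?thesis using std[OF zZ] by simp
  qed
qed

lemma part_ii_loc:
  assumes l0: "l 0 \<noteq> 0" and lr: "l r \<noteq> 0" and adm: "admissibleBetas l r B"
    and suit: "suitable l r B W" and zB: "z \<notin> B" and i: "i < r"
  shows "\<exists>a. (\<forall>j<r. inLoc z (a j)) \<and> W i = lincomb r a (\<lambda>j. Sop l r (W j))"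
proof -
  have bas: "isBasis r W" and lib: "\<And>\<alpha>. \<alpha> \<in> Zset l r B \<Longrightarrow> localIntegralBasis l r \<alpha> W"
    and std: "\<And>\<alpha>. \<alpha> \<notin> Zset l r B \<Longrightarrow> spanLoc r \<alpha> W = spanLoc r \<alpha> stdbasis"
    using suit unfolding suitable_def by auto
  have r0: "r > 0" using i by simp
  have "\<forall>j<r. Aelt r (W j)" using bas unfolding isBasis_def by (rule conjunct1)
  hence AW: "Aelt r (W i)" using i by simp
  define g where "g = Sinv l r (W i)"
  have Ag: "Aelt r g" unfolding g_def by (rule Aelt_Sinv)
  have Sg: "Sop l r g = W i" unfolding g_def by (rule Sop_Sinv[OF l0 lr AW])
  have gspan: "g \<in> spanLoc r (z + 1) W"
  proof (cases "z + 1 \<in> Zset l r B")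
    case True
    have intW: "integralAt l r z (W i)"
    proof (cases "z \<in> Zset l r B")
      case True
      then show ?thesis using lib[OF True] i unfolding localIntegralBasis_def by blast
    next
      case False
      have nrb: "\<And>n::nat. n > 0 \<Longrightarrow> poly (acp (l r)) (z - of_nat n) \<noteq> 0"
        using orb_O3[OF False \<open>z + 1 \<in> Zset l r B\<close>] isRoot_iff by blast
      have "W i \<in> spanLoc r z stdbasis" using own_span[OF i] std[OF False] by blast
      hence "\<forall>k<r. inLoc z (W i k)" by (simp add: spanLoc_std_iff)
      thus ?thesis using Loc_imp_integral[where l=l and r=r, OF r0 lr nrb] by blast
    qed
    hence "integralAt l r (z + 1) g" using integralAt_Sop[where l=l and r=r, OF lr, of z g] Sg by simp
    thus ?thesis using lib[OF True] Ag unfolding localIntegralBasis_def by blast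
  next
    case False
    have zZ: "z \<notin> Zset l r B" using orb_O1[of z l r B] False zB by blast
    have n0: "poly (acp (l 0)) z \<noteq> 0" using orb_O2[OF adm zZ False zB] isRoot_iff by blast
    have "W i \<in> spanLoc r z stdbasis" using own_span[OF i] std[OF zZ] by blast
    hence wl: "\<forall>k<r. inLoc z (W i k)" by (simp add: spanLoc_std_iff)
    have "\<forall>j<r. inLoc (z + 1) (g j)"
    proof (intro allI impI)
      fix j assume j: "j < r"
      show "inLoc (z + 1) (g j)"
      proof (cases "j = r - 1")
        case True
        have "inLoc z (- W i 0 * to_fract (l r) / to_fract (l 0))"
          using wl r0 n0 by (intro inLoc_div inLoc_mult inLoc_minus inLoc_to_fract) auto
        thus ?thesis unfolding g_def Sinv_def using j True by (simp add: inLoc_shR_m1)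
      next
        case False
        have "j + 1 < r" using j False by arith
        hence "inLoc z (W i (j + 1) - W i 0 * to_fract (l (j + 1)) / to_fract (l 0))"
          using wl r0 n0 by (intro inLoc_diff inLoc_div inLoc_mult inLoc_to_fract) auto
        thus ?thesis unfolding g_def Sinv_def using j False by (simp add: inLoc_shR_m1)
      qed
    qed
    hence "g \<in> spanLoc r (z + 1) stdbasis" using Ag by (simp add: spanLoc_std_iff)
    thus ?thesis using std[OF False] by simp
  qed
  then obtain a where a: "g = lincomb r a W" "\<forall>j<r. inLoc (z + 1) (a j)"
    unfolding spanLoc_def by (auto simp only: mem_Collect_eq)
  have "W i = Sop l r g" using Sg by (rule sym)
  also have "\<dots> = lincomb r (\<lambda>j. sigmaR (a j)) (\<lambda>j. Sop l r (W j))"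
    unfolding a(1) by (rule Sop_lincomb)
  finally have wi: "W i = lincomb r (\<lambda>j. sigmaR (a j)) (\<lambda>j. Sop l r (W j))" .
  have al: "\<forall>j<r. inLoc z (sigmaR (a j))" using a(2) inLoc_sigmaR by blast
  show ?thesis by (rule exI[of _ "\<lambda>j. sigmaR (a j)"]) (rule conjI[OF al wi])
qed

lemma lincomb_cong2: "(\<And>j. j < r \<Longrightarrow> V j = V' j) \<Longrightarrow> lincomb r a V = lincomb r a V'"
  unfolding lincomb_def by (intro ext sum.cong) auto

lemma basis_exists: "isBasis r W \<Longrightarrow> Aelt r c \<Longrightarrow> \<exists>a. c = lincomb r a W"
  unfolding isBasis_def by blast

lemma isBasis_Aelt: "isBasis r W \<Longrightarrow> j < r \<Longrightarrow> Aelt r (W j)"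
proof -
  assume "isBasis r W" "j < r"
  moreover have "isBasis r W \<Longrightarrow> \<forall>j<r. Aelt r (W j)" unfolding isBasis_def by (rule conjunct1)
  ultimately show ?thesis by blast
qed

lemma part_i:
  assumes l0: "l 0 \<noteq> 0" and lr: "l r \<noteq> 0" and adm: "admissibleBetas l r B"
    and suit: "suitable l r B W"
    and e0: "e \<noteq> 0"
    and hM: "\<forall>i<r. Sop l r (W i) = lincomb r (\<lambda>j. to_fract (M i j) / to_fract e) W"
    and g: "gcdOne (insert e {M i j | i j. i < r \<and> j < r})"
  shows "shiftFree e \<and> (\<forall>z. poly (acp e) z = 0 \<longrightarrow> z \<in> B) \<and> invertibleMat r (\<lambda>i j. to_fract (M i j))"
proof -
  have bas: "isBasis r W" using suit unfolding suitable_def by blast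
  have loc: "\<forall>x\<in>{M i j | i j. i < r \<and> j < r}. inLoc z (to_fract x / to_fract e)" if zB: "z \<notin> B" for z
  proof
    fix x assume "x \<in> {M i j | i j. i < r \<and> j < r}"
    then obtain i j where ij: "x = M i j" "i < r" "j < r" by blast
    have "Sop l r (W i) \<in> spanLoc r z W" by (rule part_i_loc[OF l0 lr adm suit zB ij(2)])
    then obtain a where a: "Sop l r (W i) = lincomb r a W" "\<forall>j<r. inLoc z (a j)"
      unfolding spanLoc_def by (auto simp only: mem_Collect_eq)
    have "a j = to_fract (M i j) / to_fract e"
      using basis_unique[OF bas _ ij(3), of a "\<lambda>j. to_fract (M i j) / to_fract e"] a(1) hM ij(2) by simp
    thus "inLoc z (to_fract x / to_fract e)" using a(2) ij by metis
  qed
  have roots: "\<forall>z. poly (acp e) z = 0 \<longrightarrow> z \<in> B"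
    using root_in_B[OF e0 g loc] by blast
  have sf: "shiftFree e" using shiftFree_of_roots[OF adm e0] roots by blast
  define A where "A = (\<lambda>i. SOME a. Sinv l r (W i) = lincomb r a W)"
  have A: "Sinv l r (W i) = lincomb r (A i) W" for i
    unfolding A_def using basis_exists[OF bas Aelt_Sinv] by (rule someI_ex)
  define P where "P = (\<lambda>i j. sigmaR (A i j))"
  have PW: "W i = lincomb r (P i) (\<lambda>j. Sop l r (W j))" if "i < r" for i
  proof -
    have "W i = Sop l r (Sinv l r (W i))" using Sop_Sinv[OF l0 lr isBasis_Aelt[OF bas that]] by simp
    also have "\<dots> = lincomb r (P i) (\<lambda>j. Sop l r (W j))" unfolding A Sop_lincomb P_def ..
    finally show ?thesis .
  qed
  have inv: "invertibleMat r (\<lambda>i j. to_fract (M i j))"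
  proof (rule inv_scaled[where c = "to_fract e" and P = P])
    show "to_fract e \<noteq> 0" using e0 by simp
  next
    fix i k assume i: "i < r" and k: "k < r"
    have "lincomb r (\<lambda>k. \<Sum>j<r. to_fract (M i j) / to_fract e * P j k) (\<lambda>j. Sop l r (W j))
        = lincomb r (\<lambda>j. to_fract (M i j) / to_fract e) (\<lambda>j. lincomb r (P j) (\<lambda>j. Sop l r (W j)))"
      by (rule lincomb_lincomb[symmetric])
    also have "\<dots> = lincomb r (\<lambda>j. to_fract (M i j) / to_fract e) W"
      by (rule lincomb_cong2) (simp add: PW)
    also have "\<dots> = Sop l r (W i)" using hM i by simp
    also have "\<dots> = lincomb r (\<lambda>j. if j = i then 1 else 0) (\<lambda>j. Sop l r (W j))"
      using lincomb_delta[OF i, of "\<lambda>j. Sop l r (W j)"] by simp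
    finally have "(\<Sum>j<r. to_fract (M i j) / to_fract e * P j k) = (if k = i then 1 else 0)"
      by (rule Sbasis_unique[OF bas l0 lr _ k])
    thus "(\<Sum>j<r. to_fract (M i j) / to_fract e * P j k) = (if i = k then 1 else 0)" by auto
  next
    fix i k assume i: "i < r" and k: "k < r"
    have "lincomb r (\<lambda>k. \<Sum>j<r. P i j * (to_fract (M j k) / to_fract e)) W
        = lincomb r (P i) (\<lambda>j. lincomb r (\<lambda>k. to_fract (M j k) / to_fract e) W)"
      by (rule lincomb_lincomb[symmetric])
    also have "\<dots> = lincomb r (P i) (\<lambda>j. Sop l r (W j))"
      by (rule lincomb_cong2) (simp add: hM)
    also have "\<dots> = W i" using PW[OF i] by simp
    also have "\<dots> = lincomb r (\<lambda>j. if j = i then 1 else 0) W"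
      using lincomb_delta[OF i, of W] by simp
    finally have "(\<Sum>j<r. P i j * (to_fract (M j k) / to_fract e)) = (if k = i then 1 else 0)"
      by (rule basis_unique[OF bas _ k])
    thus "(\<Sum>j<r. P i j * (to_fract (M j k) / to_fract e)) = (if i = k then 1 else 0)" by auto
  qed
  show ?thesis using sf roots inv by blast
qed

lemma part_ii:
  assumes l0: "l 0 \<noteq> 0" and lr: "l r \<noteq> 0" and adm: "admissibleBetas l r B"
    and suit: "suitable l r B W"
    and f0: "f \<noteq> 0"
    and hN: "\<forall>i<r. W i = lincomb r (\<lambda>j. to_fract (N i j) / to_fract f) (\<lambda>j. Sop l r (W j))"
    and g: "gcdOne (insert f {N i j | i j. i < r \<and> j < r})"
  shows "shiftFree f \<and> (\<forall>z. poly (acp f) z = 0 \<longrightarrow> z \<in> B) \<and> invertibleMat r (\<lambda>i j. to_fract (N i j))"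
proof -
  have bas: "isBasis r W" using suit unfolding suitable_def by blast
  have loc: "\<forall>x\<in>{N i j | i j. i < r \<and> j < r}. inLoc z (to_fract x / to_fract f)" if zB: "z \<notin> B" for z
  proof
    fix x assume "x \<in> {N i j | i j. i < r \<and> j < r}"
    then obtain i j where ij: "x = N i j" "i < r" "j < r" by blast
    obtain a where a: "\<forall>j<r. inLoc z (a j)" "W i = lincomb r a (\<lambda>j. Sop l r (W j))"
      using part_ii_loc[OF l0 lr adm suit zB ij(2)] by blast
    have "a j = to_fract (N i j) / to_fract f"
      using Sbasis_unique[OF bas l0 lr _ ij(3), of a "\<lambda>j. to_fract (N i j) / to_fract f"] a(2) hN ij(2) by simp
    thus "inLoc z (to_fract x / to_fract f)" using a(1) ij by metis
  qed
  have roots: "\<forall>z. poly (acp f) z = 0 \<longrightarrow> z \<in> B"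
    using root_in_B[OF f0 g loc] by blast
  have sf: "shiftFree f" using shiftFree_of_roots[OF adm f0] roots by blast
  define R where "R = (\<lambda>i. SOME a. Sop l r (W i) = lincomb r a W)"
  have RW: "Sop l r (W i) = lincomb r (R i) W" for i
    unfolding R_def using basis_exists[OF bas Aelt_Sop] by (rule someI_ex)
  have inv: "invertibleMat r (\<lambda>i j. to_fract (N i j))"
  proof (rule inv_scaled[where c = "to_fract f" and P = R])
    show "to_fract f \<noteq> 0" using f0 by simp
  next
    fix i k assume i: "i < r" and k: "k < r"
    have "lincomb r (\<lambda>k. \<Sum>j<r. to_fract (N i j) / to_fract f * R j k) W
        = lincomb r (\<lambda>j. to_fract (N i j) / to_fract f) (\<lambda>j. lincomb r (R j) W)"
      by (rule lincomb_lincomb[symmetric])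
    also have "\<dots> = lincomb r (\<lambda>j. to_fract (N i j) / to_fract f) (\<lambda>j. Sop l r (W j))"
      by (rule lincomb_cong2) (simp add: RW)
    also have "\<dots> = W i" using hN i by simp
    also have "\<dots> = lincomb r (\<lambda>j. if j = i then 1 else 0) W"
      using lincomb_delta[OF i, of W] by simp
    finally have "(\<Sum>j<r. to_fract (N i j) / to_fract f * R j k) = (if k = i then 1 else 0)"
      by (rule basis_unique[OF bas _ k])
    thus "(\<Sum>j<r. to_fract (N i j) / to_fract f * R j k) = (if i = k then 1 else 0)" by auto
  next
    fix i k assume i: "i < r" and k: "k < r"
    have "lincomb r (\<lambda>k. \<Sum>j<r. R i j * (to_fract (N j k) / to_fract f)) (\<lambda>j. Sop l r (W j))
        = lincomb r (R i) (\<lambda>j. lincomb r (\<lambda>k. to_fract (N j k) / to_fract f) (\<lambda>j. Sop l r (W j)))"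
      by (rule lincomb_lincomb[symmetric])
    also have "\<dots> = lincomb r (R i) W"
      by (rule lincomb_cong2) (simp add: hN)
    also have "\<dots> = Sop l r (W i)" using RW by simp
    also have "\<dots> = lincomb r (\<lambda>j. if j = i then 1 else 0) (\<lambda>j. Sop l r (W j))"
      using lincomb_delta[OF i, of "\<lambda>j. Sop l r (W j)"] by simp
    finally have "(\<Sum>j<r. R i j * (to_fract (N j k) / to_fract f)) = (if k = i then 1 else 0)"
      by (rule Sbasis_unique[OF bas l0 lr _ k])
    thus "(\<Sum>j<r. R i j * (to_fract (N j k) / to_fract f)) = (if i = k then 1 else 0)" by auto
  qed
  show ?thesis using sf roots inv by blast
qed

theorem mainTheorem6:
  fixes l :: "nat \<Rightarrow> 'a::field_char_0 poly" and r :: nat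
    and B :: "'a alg_closure set" and W :: "nat \<Rightarrow> nat \<Rightarrow> 'a poly fract"
  assumes "l 0 \<noteq> 0" and "l r \<noteq> 0"
    and "admissibleBetas l r B"
    and "suitable l r B W"
  shows "(\<forall>e M. e \<noteq> 0 \<and>
            (\<forall>i<r. Sop l r (W i) = lincomb r (\<lambda>j. to_fract (M i j) / to_fract e) W) \<and>
            gcdOne (insert e {M i j | i j. i < r \<and> j < r})
          \<longrightarrow> shiftFree e \<and> (\<forall>z. poly (acp e) z = 0 \<longrightarrow> z \<in> B) \<and>
              invertibleMat r (\<lambda>i j. to_fract (M i j)))
       \<and> (\<forall>f N. f \<noteq> 0 \<and>
            (\<forall>i<r. W i = lincomb r (\<lambda>j. to_fract (N i j) / to_fract f) (\<lambda>j. Sop l r (W j))) \<and>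
            gcdOne (insert f {N i j | i j. i < r \<and> j < r})
          \<longrightarrow> shiftFree f \<and> (\<forall>z. poly (acp f) z = 0 \<longrightarrow> z \<in> B) \<and>
              invertibleMat r (\<lambda>i j. to_fract (N i j)))"
  using part_i[OF assms] part_ii[OF assms] by blast

end
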